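(* Let $\mathcal{H}$ be a $d$-dimensional Hilbert space and $\mathcal{H}_{\mathrm{anc}}$ the Hilbert space of an ancillary system with $\dim\mathcal{H}_{\mathrm{anc}}\ge 2$. Suppose the classical pure states $\{|\chi_i\rangle\}_{i=1}^d\subset\mathcal{H}$ form a linearly independent set spanning $\mathcal{H}$. Then there exists an isometry $\Lambda:\mathcal{H}\to\mathcal{H}\otimes\mathcal{H}_{\mathrm{anc}}^{\otimes d}$ such that for every density operator $\rho$ on $\mathcal{H}$ with nonclassical number $\mathrm{NN}(\rho)=k$, regarding $\Lambda\rho\Lambda^\dagger$ as a state of the $d+1$ parties $\mathcal{H},\mathcal{H}_{\mathrm{anc}},\dots,\mathcal{H}_{\mathrm{anc}}$: (a) if $2\le k\le d$ (i.e. $\rho$ is nonclassical), then $\Lambda\rho\Lambda^\dagger$ is genuinely $(k+1)$-partite entangled, i.e. $\mathrm{ed}(\Lambda\rho\Lambda^\dagger)=k+1$; (b) $\Lambda\rho\Lambda^\dagger$ is fully separable ($\mathrm{ed}=1$) if and only if $k=1$ (i.e. $\rho$ is classical).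
   Context: Given a finite set of "classical" pure states $\{|\chi_i\rangle\}$ spanning $\mathcal{H}$, the nonclassical rank of a pure state is $\mathrm{NR}(|\psi\rangle)=\min\{r : |\psi\rangle=\sum_{i=1}^r c_i|\chi_i\rangle,\ c_i\neq0\}$, and the nonclassical number of a mixed state is $\mathrm{NN}(\rho)=\min_{\{p_i,|\psi_i\rangle\}}\max_i\mathrm{NR}(|\psi_i\rangle)$ over all pure-state decompositions $\rho=\sum_ip_i|\psi_i\rangle\langle\psi_i|$; $\rho$ is classical iff $\mathrm{NN}(\rho)=1$. For a multipartite system, a pure state is $k$-producible if it is a tensor product $|\psi_1\rangle\otimes\cdots\otimes|\psi_m\rangle$ where each factor pertains to at most $k$ parties; a mixed state is $k$-producible if it is a convex combination of $k$-producible pure states. A state is genuinely $k$-partite entangled, or has entanglement depth $\mathrm{ed}(\rho)=k$, if it is $k$-producible but not $(k-1)$-producible; $\mathrm{ed}(\rho)=1$ means fully separable. *)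

theory Defs
  imports Complex_Main "HOL-Library.FuncSet" "HOL-Library.Disjoint_Sets"
begin

(* Finite-dimensional Hilbert spaces are represented concretely: a vector is a function
   'i => complex, considered on a finite carrier X of basis indices; an operator is a
   kernel (matrix) 'i => 'i => complex on X x X. *)

definition inner_on :: "'i set \<Rightarrow> ('i \<Rightarrow> complex) \<Rightarrow> ('i \<Rightarrow> complex) \<Rightarrow> complex" where
  "inner_on X u v = (\<Sum>x\<in>X. cnj (u x) * v x)"

definition unit_vec :: "'i set \<Rightarrow> ('i \<Rightarrow> complex) \<Rightarrow> bool" where
  "unit_vec X v \<longleftrightarrow> inner_on X v v = 1"

definition density_op :: "'i set \<Rightarrow> ('i \<Rightarrow> 'i \<Rightarrow> complex) \<Rightarrow> bool" where
  "density_op X \<rho> \<longleftrightarrow>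
     (\<forall>x\<in>X. \<forall>y\<in>X. \<rho> y x = cnj (\<rho> x y)) \<and>
     (\<forall>v. 0 \<le> Re (\<Sum>x\<in>X. \<Sum>y\<in>X. cnj (v x) * \<rho> x y * v y)) \<and>
     (\<Sum>x\<in>X. \<rho> x x) = 1"

definition pure_decomp :: "'i set \<Rightarrow> ('i \<Rightarrow> 'i \<Rightarrow> complex) \<Rightarrow> nat set \<Rightarrow> (nat \<Rightarrow> real)
     \<Rightarrow> (nat \<Rightarrow> 'i \<Rightarrow> complex) \<Rightarrow> bool" where
  "pure_decomp X \<rho> I p \<psi> \<longleftrightarrow>
     finite I \<and> (\<forall>i\<in>I. 0 < p i) \<and> sum p I = 1 \<and> (\<forall>i\<in>I. unit_vec X (\<psi> i)) \<and>
     (\<forall>x\<in>X. \<forall>y\<in>X. \<rho> x y = (\<Sum>i\<in>I. complex_of_real (p i) * \<psi> i x * cnj (\<psi> i y)))"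

definition nonclassical_rank :: "'i set \<Rightarrow> 'c set \<Rightarrow> ('c \<Rightarrow> 'i \<Rightarrow> complex)
     \<Rightarrow> ('i \<Rightarrow> complex) \<Rightarrow> nat" where
  "nonclassical_rank X C \<chi> \<psi> =
     (LEAST r. \<exists>S. S \<subseteq> C \<and> card S = r \<and>
        (\<exists>c. (\<forall>s\<in>S. c s \<noteq> 0) \<and> (\<forall>x\<in>X. \<psi> x = (\<Sum>s\<in>S. c s * \<chi> s x))))"

definition nonclassical_number :: "'i set \<Rightarrow> 'c set \<Rightarrow> ('c \<Rightarrow> 'i \<Rightarrow> complex)
     \<Rightarrow> ('i \<Rightarrow> 'i \<Rightarrow> complex) \<Rightarrow> nat" where
  "nonclassical_number X C \<chi> \<rho> =
     (LEAST k. \<exists>I p \<psi>. pure_decomp X \<rho> I p \<psi> \<and>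
        (\<forall>i\<in>I. nonclassical_rank X C \<chi> (\<psi> i) \<le> k))"

definition lin_indep_on :: "'i set \<Rightarrow> 'c set \<Rightarrow> ('c \<Rightarrow> 'i \<Rightarrow> complex) \<Rightarrow> bool" where
  "lin_indep_on X C \<chi> \<longleftrightarrow>
     (\<forall>c. (\<forall>x\<in>X. (\<Sum>s\<in>C. c s * \<chi> s x) = 0) \<longrightarrow> (\<forall>s\<in>C. c s = 0))"

definition spans_on :: "'i set \<Rightarrow> 'c set \<Rightarrow> ('c \<Rightarrow> 'i \<Rightarrow> complex) \<Rightarrow> bool" where
  "spans_on X C \<chi> \<longleftrightarrow> (\<forall>v. \<exists>c. \<forall>x\<in>X. v x = (\<Sum>s\<in>C. c s * \<chi> s x))"

definition isometry_on :: "'i set \<Rightarrow> 'j set \<Rightarrow> ('j \<Rightarrow> 'i \<Rightarrow> complex) \<Rightarrow> bool" where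
  "isometry_on X Y L \<longleftrightarrow>
     (\<forall>a\<in>X. \<forall>b\<in>X. (\<Sum>y\<in>Y. cnj (L y a) * L y b) = (if a = b then 1 else 0))"

definition conj_op :: "'i set \<Rightarrow> ('j \<Rightarrow> 'i \<Rightarrow> complex) \<Rightarrow> ('i \<Rightarrow> 'i \<Rightarrow> complex)
     \<Rightarrow> ('j \<Rightarrow> 'j \<Rightarrow> complex)" where
  "conj_op X L \<rho> = (\<lambda>f g. \<Sum>a\<in>X. \<Sum>b\<in>X. L f a * \<rho> a b * cnj (L g b))"

text \<open>Multipartite system with parties 0..<n, party j of local dimension dims j.
  Basis indices are tuples f with f j < dims j.\<close>
definition mp_idx :: "nat \<Rightarrow> (nat \<Rightarrow> nat) \<Rightarrow> (nat \<Rightarrow> nat) set" where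
  "mp_idx n dims = (\<Pi>\<^sub>E j\<in>{..<n}. {..<dims j})"

definition producible_pure :: "nat \<Rightarrow> (nat \<Rightarrow> nat) \<Rightarrow> nat \<Rightarrow> ((nat \<Rightarrow> nat) \<Rightarrow> complex) \<Rightarrow> bool" where
  "producible_pure n dims k \<psi> \<longleftrightarrow>
     (\<exists>P \<phi>. partition_on {..<n} P \<and> (\<forall>B\<in>P. card B \<le> k) \<and>
        (\<forall>f\<in>mp_idx n dims. \<psi> f = (\<Prod>B\<in>P. \<phi> B (restrict f B))))"

definition producible :: "nat \<Rightarrow> (nat \<Rightarrow> nat) \<Rightarrow> nat \<Rightarrow> ((nat \<Rightarrow> nat) \<Rightarrow> (nat \<Rightarrow> nat) \<Rightarrow> complex) \<Rightarrow> bool" where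
  "producible n dims k \<rho> \<longleftrightarrow>
     (\<exists>I p \<psi>. pure_decomp (mp_idx n dims) \<rho> I p \<psi> \<and> (\<forall>i\<in>I. producible_pure n dims k (\<psi> i)))"

definition ent_depth :: "nat \<Rightarrow> (nat \<Rightarrow> nat) \<Rightarrow> ((nat \<Rightarrow> nat) \<Rightarrow> (nat \<Rightarrow> nat) \<Rightarrow> complex) \<Rightarrow> nat" where
  "ent_depth n dims \<rho> = (LEAST k. producible n dims k \<rho>)"

text \<open>Local dimensions of H (party 0, dim d) tensor d ancillas (parties 1..d, dim m).\<close>
definition sys_anc_dims :: "nat \<Rightarrow> nat \<Rightarrow> nat \<Rightarrow> nat" where
  "sys_anc_dims d m j = (if j = 0 then d else m)"

end

theory Submission
  imports Defs
begin

definition psd :: "nat \<Rightarrow> (nat \<Rightarrow> nat \<Rightarrow> complex) \<Rightarrow> bool" where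
  "psd n H \<longleftrightarrow> (\<forall>x<n. \<forall>y<n. H y x = cnj (H x y)) \<and>
     (\<forall>v. 0 \<le> Re (\<Sum>x<n. \<Sum>y<n. cnj (v x) * H x y * v y))"

lemma psd_herm: "psd n H \<Longrightarrow> x < n \<Longrightarrow> y < n \<Longrightarrow> H y x = cnj (H x y)"
  unfolding psd_def by blast

lemma psd_pos: "psd n H \<Longrightarrow> 0 \<le> Re (\<Sum>x<n. \<Sum>y<n. cnj (v x) * H x y * v y)"
  unfolding psd_def by blast

lemma sum_two_pt:
  assumes "finite A" "a \<in> A" "b \<in> A" "a \<noteq> b" "\<forall>x\<in>A. x \<noteq> a \<and> x \<noteq> b \<longrightarrow> f x = 0"
  shows "sum f A = f a + f b"
proof -
  have "sum f A = sum f {a,b}"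
    using assms by (intro sum.mono_neutral_right) auto
  thus ?thesis using assms by simp
qed

lemma sum_one_pt:
  assumes "finite A" "a \<in> A" "\<forall>x\<in>A. x \<noteq> a \<longrightarrow> f x = 0"
  shows "sum f A = f a"
proof -
  have "sum f A = sum f {a}"
    using assms by (intro sum.mono_neutral_right) auto
  thus ?thesis by simp
qed

lemma qf_two:
  fixes H :: "nat \<Rightarrow> nat \<Rightarrow> complex" and \<beta> \<gamma> :: complex
  assumes "y < N" "n < N" "y \<noteq> n"
  defines "v \<equiv> (\<lambda>x. if x = n then \<beta> else if x = y then \<gamma> else 0)"
  shows "(\<Sum>x<N. \<Sum>z<N. cnj (v x) * H x z * v z) =
     cnj \<gamma> * H y y * \<gamma> + cnj \<gamma> * H y n * \<beta> + cnj \<beta> * H n y * \<gamma> + cnj \<beta> * H n n * \<beta>"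
proof -
  have vn: "v n = \<beta>" and vy: "v y = \<gamma>" using assms(3) by (simp_all add: v_def)
  have v0: "\<And>z. z \<noteq> y \<and> z \<noteq> n \<Longrightarrow> v z = 0" by (simp add: v_def)
  have in_: "\<And>x. (\<Sum>z<N. cnj (v x) * H x z * v z) = cnj (v x) * H x y * \<gamma> + cnj (v x) * H x n * \<beta>"
  proof -
    fix x
    have "(\<Sum>z<N. cnj (v x) * H x z * v z) = cnj (v x) * H x y * v y + cnj (v x) * H x n * v n"
      by (rule sum_two_pt) (use assms(1-3) v0 in auto)
    thus "?thesis x" by (simp only: vn vy)
  qed
  have "(\<Sum>x<N. cnj (v x) * H x y * \<gamma> + cnj (v x) * H x n * \<beta>) =
     (cnj (v y) * H y y * \<gamma> + cnj (v y) * H y n * \<beta>) + (cnj (v n) * H n y * \<gamma> + cnj (v n) * H n n * \<beta>)"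
    by (rule sum_two_pt) (use assms(1-3) v0 in auto)
  thus ?thesis by (simp only: in_ vn vy add.assoc)
qed

lemma psd_diag:
  assumes "psd N H" "y < N"
  shows "Im (H y y) = 0" "0 \<le> Re (H y y)"
proof -
  have "H y y = cnj (H y y)" using psd_herm[OF assms(1,2,2)] .
  hence "Im (H y y) = Im (cnj (H y y))" by (rule arg_cong)
  thus "Im (H y y) = 0" by simp
  define v where "v = (\<lambda>x. if x = y then (1::complex) else 0)"
  have "(\<Sum>x<N. \<Sum>z<N. cnj (v x) * H x z * v z) = H y y"
    using assms(2)
    by (subst sum_one_pt[of _ y], simp, simp, simp add: v_def,
        subst sum_one_pt[of _ y], auto simp: v_def)
  thus "0 \<le> Re (H y y)" using psd_pos[OF assms(1), of v] by simp
qed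

lemma psd_row_zero:
  assumes "psd N H" "n < N" "H n n = 0" "y < N"
  shows "H n y = 0"
proof (cases "y = n")
  case True thus ?thesis using assms by simp
next
  case False
  define b where "b = H n y"
  have hy: "H y n = cnj b" using assms unfolding psd_def b_def by blast
  define r where "r = 1 / (Re (H y y) + 1)"
  have Hyy: "Im (H y y) = 0" "0 \<le> Re (H y y)" using psd_diag assms by auto
  have rpos: "r > 0" using Hyy by (simp add: r_def)
  define v where "v = (\<lambda>x. if x = n then (1::complex) else if x = y then - of_real r * cnj b else 0)"
  have "0 \<le> Re (\<Sum>x<N. \<Sum>z<N. cnj (v x) * H x z * v z)" using assms unfolding psd_def by blast
  also have "(\<Sum>x<N. \<Sum>z<N. cnj (v x) * H x z * v z) =
     cnj (- of_real r * cnj b) * H y y * (- of_real r * cnj b) + cnj (- of_real r * cnj b) * H y n * 1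
      + cnj 1 * H n y * (- of_real r * cnj b) + cnj 1 * H n n * 1"
    unfolding v_def by (rule qf_two) (use assms False in auto)
  also have "\<dots> = of_real r * of_real r * H y y * (b * cnj b) - 2 * of_real r * (b * cnj b)"
    using assms(3) hy by (simp add: b_def[symmetric] algebra_simps)
  also have "\<dots> = of_real ((r * r * Re (H y y) - 2 * r) * (cmod b)^2)"
  proof -
    have e: "H y y = of_real (Re (H y y))" using Hyy by (simp add: complex_eq_iff)
    show ?thesis unfolding complex_norm_square[symmetric] by (subst e) (simp add: algebra_simps)
  qed
  also have "Re \<dots> = (r * r * Re (H y y) - 2 * r) * (cmod b)^2" by simp
  finally have "0 \<le> (r * r * Re (H y y) - 2 * r) * (cmod b)^2" .
  moreover have "r * r * Re (H y y) - 2 * r < 0"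
  proof -
    have "r * Re (H y y) < 1" using Hyy by (simp add: r_def)
    hence "r * (r * Re (H y y)) < r * 2" using rpos by (intro mult_strict_left_mono) auto
    thus ?thesis by (simp add: algebra_simps)
  qed
  ultimately have "(cmod b)^2 \<le> 0" by (smt (verit) mult_neg_pos zero_less_power2 power2_eq_square)
  thus ?thesis by (simp add: b_def)
qed

lemma psd_restrict:
  assumes "psd (Suc n) H" shows "psd n H"
  unfolding psd_def
proof (intro conjI allI impI)
  fix x y assume "x < n" "y < n" thus "H y x = cnj (H x y)" using psd_herm[OF assms, of x y] by simp
next
  fix v :: "nat \<Rightarrow> complex"
  define v0 where "v0 = (\<lambda>x. if x = n then 0 else v x)"
  have "0 \<le> Re (\<Sum>x<Suc n. \<Sum>y<Suc n. cnj (v0 x) * H x y * v0 y)" by (rule psd_pos[OF assms])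
  also have "(\<Sum>x<Suc n. \<Sum>y<Suc n. cnj (v0 x) * H x y * v0 y) = (\<Sum>x<n. \<Sum>y<n. cnj (v x) * H x y * v y)"
    by (simp add: v0_def)
  finally show "0 \<le> Re (\<Sum>x<n. \<Sum>y<n. cnj (v x) * H x y * v y)" .
qed

lemma schur_psd:
  fixes H :: "nat \<Rightarrow> nat \<Rightarrow> complex"
  assumes "psd (Suc n) H" "Im (H n n) = 0" "Re (H n n) > 0"
  shows "psd n (\<lambda>x y. H x y - H x n * H n y / H n n)"
  unfolding psd_def
proof (intro conjI allI impI)
  have hr: "cnj (H n n) = H n n" using assms(2) by (simp add: complex_eq_iff)
  fix x y assume "x < n" "y < n"
  thus "H y x - H y n * H n x / H n n = cnj (H x y - H x n * H n y / H n n)"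
  proof -
    have "H y x = cnj (H x y)" "H y n = cnj (H n y)" "H n x = cnj (H x n)"
      using psd_herm[OF assms(1), of x y] psd_herm[OF assms(1), of n y] psd_herm[OF assms(1), of x n] \<open>x < n\<close> \<open>y < n\<close> by auto
    thus ?thesis using hr by (simp add: mult.commute)
  qed
next
  fix v :: "nat \<Rightarrow> complex"
  define h where "h = H n n"
  have hr: "cnj h = h" unfolding h_def using assms(2) by (simp add: complex_eq_iff)
  have h0: "h \<noteq> 0" unfolding h_def using assms(3) by auto
  define \<beta> where "\<beta> = (\<Sum>y<n. H n y * v y)"
  define v' where "v' = (\<lambda>x. if x = n then - \<beta> / h else v x)"
  have herm: "\<And>x. x < n \<Longrightarrow> H x n = cnj (H n x)" using psd_herm[OF assms(1), of n] by simp
  have cb: "(\<Sum>x<n. cnj (v x) * H x n) = cnj \<beta>"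
    unfolding \<beta>_def cnj_sum by (rule sum.cong) (auto simp: herm mult.commute)
  define Q0 where "Q0 = (\<Sum>x<n. \<Sum>y<n. cnj (v x) * H x y * v y)"
  have c: "H n n = h" by (simp add: h_def)
  have "(\<Sum>x<Suc n. \<Sum>y<Suc n. cnj (v' x) * H x y * v' y) =
      (\<Sum>x<n. (\<Sum>y<n. cnj (v x) * H x y * v y) + cnj (v x) * H x n * (- \<beta> / h))
       + ((\<Sum>y<n. cnj (- \<beta> / h) * H n y * v y) + cnj (- \<beta> / h) * h * (- \<beta> / h))"
  proof -
    have a: "v' n = - \<beta> / h" by (simp add: v'_def)
    have b: "\<And>x. x \<in> {..<n} \<Longrightarrow> v' x = v x" by (simp add: v'_def)
    show ?thesis by (simp only: sum.lessThan_Suc a b c cong: sum.cong)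
  qed
  also have "\<dots> = Q0 + cnj \<beta> * (- \<beta> / h) + cnj (- \<beta> / h) * \<beta> + cnj (- \<beta> / h) * h * (- \<beta> / h)"
  proof -
    have e1: "(\<Sum>x<n. cnj (v x) * H x n * (- \<beta> / h)) = cnj \<beta> * (- \<beta> / h)"
      by (subst sum_distrib_right[symmetric]) (simp only: cb)
    have e2: "(\<Sum>y<n. cnj (- \<beta> / h) * H n y * v y) = cnj (- \<beta> / h) * \<beta>"
      unfolding \<beta>_def by (simp add: sum_distrib_left mult.assoc)
    show ?thesis by (simp only: sum.distrib e1 e2 Q0_def[symmetric] add.assoc)
  qed
  also have "\<dots> = Q0 - cnj \<beta> * \<beta> / h"
  proof -
    have "cnj (- \<beta> / h) = - cnj \<beta> / h" using hr by simp
    thus ?thesis using h0 by (simp add: field_simps)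
  qed
  also have "\<dots> = (\<Sum>x<n. \<Sum>y<n. cnj (v x) * (H x y - H x n * H n y / H n n) * v y)"
  proof -
    have pw: "\<And>x y. cnj (v x) * (H x y - H x n * H n y / H n n) * v y
        = cnj (v x) * H x y * v y - (cnj (v x) * H x n) * (H n y * v y) / h"
      by (simp add: c algebra_simps)
    have "(\<Sum>x<n. \<Sum>y<n. cnj (v x) * (H x y - H x n * H n y / H n n) * v y)
        = Q0 - (\<Sum>x<n. \<Sum>y<n. (cnj (v x) * H x n) * (H n y * v y) / h)"
      by (simp only: pw sum_subtractf Q0_def)
    also have "(\<Sum>x<n. \<Sum>y<n. (cnj (v x) * H x n) * (H n y * v y) / h) = cnj \<beta> * \<beta> / h"
    proof -
      have "(\<Sum>x<n. cnj (v x) * H x n) * (\<Sum>y<n. H n y * v y) / h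
          = (\<Sum>x<n. \<Sum>y<n. (cnj (v x) * H x n) * (H n y * v y) / h)"
        by (simp add: sum_product sum_divide_distrib)
      thus ?thesis by (simp only: cb \<beta>_def[symmetric])
    qed
    finally show ?thesis by simp
  qed
  finally have eq: "(\<Sum>x<Suc n. \<Sum>y<Suc n. cnj (v' x) * H x y * v' y) =
     (\<Sum>x<n. \<Sum>y<n. cnj (v x) * (H x y - H x n * H n y / H n n) * v y)" .
  show "0 \<le> Re (\<Sum>x<n. \<Sum>y<n. cnj (v x) * (H x y - H x n * H n y / H n n) * v y)"
  proof -
    have "0 \<le> Re (\<Sum>x<Suc n. \<Sum>y<Suc n. cnj (v' x) * H x y * v' y)"
      by (rule psd_pos[OF assms(1)])
    thus ?thesis by (simp only: eq)
  qed
qed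

lemma chol:
  "psd n H \<Longrightarrow> \<exists>w. \<forall>x<n. \<forall>y<n. H x y = (\<Sum>k<n. w k x * cnj (w k y))"
proof (induction n arbitrary: H)
  case 0 show ?case by simp
next
  case (Suc n)
  have Hr: "Im (H n n) = 0" "0 \<le> Re (H n n)" using psd_diag[OF Suc.prems] by auto
  have herm: "\<And>x y. x < Suc n \<Longrightarrow> y < Suc n \<Longrightarrow> H y x = cnj (H x y)"
    using psd_herm[OF Suc.prems] by blast
  show ?case
  proof (cases "Re (H n n) = 0")
    case True
    hence hz: "H n n = 0" using Hr by (simp add: complex_eq_iff)
    have row: "\<And>y. y < Suc n \<Longrightarrow> H n y = 0" using psd_row_zero[OF Suc.prems _ hz] by auto
    have col: "\<And>x. x < Suc n \<Longrightarrow> H x n = 0"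
    proof -
      fix x assume "x < Suc n"
      hence "H x n = cnj (H n x)" using herm[of n x] by simp
      thus "H x n = 0" using row[OF \<open>x < Suc n\<close>] by simp
    qed
    obtain w where w: "\<forall>x<n. \<forall>y<n. H x y = (\<Sum>k<n. w k x * cnj (w k y))"
      using Suc.IH[OF psd_restrict[OF Suc.prems]] by blast
    define w' where "w' = (\<lambda>k x. if k < n \<and> x \<noteq> n then w k x else 0)"
    show ?thesis
    proof (intro exI allI impI)
      fix x y assume xy: "x < Suc n" "y < Suc n"
      show "H x y = (\<Sum>k<Suc n. w' k x * cnj (w' k y))"
      proof (cases "x = n \<or> y = n")
        case True thus ?thesis using row col xy by (auto simp: w'_def)
      next
        case False
        hence "x < n" "y < n" using xy by auto
        hence "(\<Sum>k<Suc n. w' k x * cnj (w' k y)) = (\<Sum>k<n. w k x * cnj (w k y))"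
          by (simp add: w'_def)
        thus ?thesis using w \<open>x < n\<close> \<open>y < n\<close> by simp
      qed
    qed
  next
    case False
    hence hp: "Re (H n n) > 0" using Hr by simp
    have hn0: "H n n \<noteq> 0" using hp by auto
    obtain w where w: "\<forall>x<n. \<forall>y<n. H x y - H x n * H n y / H n n = (\<Sum>k<n. w k x * cnj (w k y))"
      using Suc.IH[OF schur_psd[OF Suc.prems Hr(1) hp]] by blast
    define sh where "sh = complex_of_real (sqrt (Re (H n n)))"
    have sh2: "cnj sh * sh = H n n"
    proof -
      have "cnj sh * sh = complex_of_real (sqrt (Re (H n n)) * sqrt (Re (H n n)))"
        by (simp only: sh_def complex_cnj_complex_of_real of_real_mult)
      also have "\<dots> = complex_of_real (Re (H n n))" using Hr(2) by (simp del: of_real_mult)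
      also have "\<dots> = H n n" using Hr(1) by (simp add: complex_eq_iff)
      finally show ?thesis .
    qed
    define w' where "w' = (\<lambda>k x. if k < n then (if x = n then 0 else w k x) else H x n / cnj sh)"
    show ?thesis
    proof (intro exI allI impI)
      fix x y assume xy: "x < Suc n" "y < Suc n"
      have last: "w' n x * cnj (w' n y) = H x n * H n y / H n n"
      proof -
        have "cnj (H y n) = H n y" using herm[of n y] xy by simp
        thus ?thesis by (simp add: w'_def sh2[symmetric] mult.commute)
      qed
      have "(\<Sum>k<Suc n. w' k x * cnj (w' k y)) = (\<Sum>k<n. w' k x * cnj (w' k y)) + H x n * H n y / H n n"
        by (simp add: last)
      also have "\<dots> = H x y"
      proof (cases "x = n \<or> y = n")
        case True
        hence "(\<Sum>k<n. w' k x * cnj (w' k y)) = 0" by (auto simp: w'_def)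
        thus ?thesis using True hn0 by auto
      next
        case False
        hence "x < n" "y < n" using xy by auto
        hence "(\<Sum>k<n. w' k x * cnj (w' k y)) = (\<Sum>k<n. w k x * cnj (w k y))"
          by (simp add: w'_def)
        thus ?thesis using w \<open>x < n\<close> \<open>y < n\<close> by (metis diff_add_cancel)
      qed
      finally show "H x y = (\<Sum>k<Suc n. w' k x * cnj (w' k y))" by simp
    qed
  qed
qed

lemma sum_sandwich:
  fixes L R :: "'a \<Rightarrow> complex" and F G :: "'k \<Rightarrow> 'a \<Rightarrow> complex"
  shows "(\<Sum>a\<in>A. \<Sum>b\<in>B. L a * (\<Sum>k\<in>I. F k a * G k b) * R b) =
         (\<Sum>k\<in>I. (\<Sum>a\<in>A. L a * F k a) * (\<Sum>b\<in>B. G k b * R b))"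
proof -
  have "(\<Sum>a\<in>A. \<Sum>b\<in>B. L a * (\<Sum>k\<in>I. F k a * G k b) * R b) =
        (\<Sum>a\<in>A. \<Sum>b\<in>B. \<Sum>k\<in>I. (L a * F k a) * (G k b * R b))"
    by (simp add: sum_distrib_left sum_distrib_right mult_ac)
  also have "\<dots> = (\<Sum>a\<in>A. \<Sum>k\<in>I. \<Sum>b\<in>B. (L a * F k a) * (G k b * R b))"
    by (rule sum.cong[OF refl], rule sum.swap)
  also have "\<dots> = (\<Sum>k\<in>I. \<Sum>a\<in>A. \<Sum>b\<in>B. (L a * F k a) * (G k b * R b))"
    by (rule sum.swap)
  also have "\<dots> = (\<Sum>k\<in>I. (\<Sum>a\<in>A. L a * F k a) * (\<Sum>b\<in>B. G k b * R b))"
    by (simp add: sum_product)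
  finally show ?thesis .
qed

lemma sum_sandwich2:
  fixes L R :: "'a \<Rightarrow> complex" and P Q :: "'a \<Rightarrow> 'c \<Rightarrow> complex" and K :: "'c \<Rightarrow> 'c \<Rightarrow> complex"
  shows "(\<Sum>f\<in>A. \<Sum>g\<in>B. L f * (\<Sum>a\<in>C. \<Sum>b\<in>D. P f a * K a b * Q g b) * R g) =
         (\<Sum>a\<in>C. \<Sum>b\<in>D. (\<Sum>f\<in>A. L f * P f a) * K a b * (\<Sum>g\<in>B. Q g b * R g))"
proof -
  have "(\<Sum>f\<in>A. \<Sum>g\<in>B. L f * (\<Sum>a\<in>C. \<Sum>b\<in>D. P f a * K a b * Q g b) * R g) =
        (\<Sum>f\<in>A. \<Sum>g\<in>B. \<Sum>a\<in>C. \<Sum>b\<in>D. (L f * P f a) * K a b * (Q g b * R g))"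
    by (simp add: sum_distrib_left sum_distrib_right mult_ac)
  also have "\<dots> = (\<Sum>f\<in>A. \<Sum>a\<in>C. \<Sum>g\<in>B. \<Sum>b\<in>D. (L f * P f a) * K a b * (Q g b * R g))"
    by (rule sum.cong[OF refl], rule sum.swap)
  also have "\<dots> = (\<Sum>f\<in>A. \<Sum>a\<in>C. \<Sum>b\<in>D. \<Sum>g\<in>B. (L f * P f a) * K a b * (Q g b * R g))"
    by (rule sum.cong[OF refl], rule sum.cong[OF refl], rule sum.swap)
  also have "\<dots> = (\<Sum>a\<in>C. \<Sum>f\<in>A. \<Sum>b\<in>D. \<Sum>g\<in>B. (L f * P f a) * K a b * (Q g b * R g))"
    by (rule sum.swap)
  also have "\<dots> = (\<Sum>a\<in>C. \<Sum>b\<in>D. \<Sum>f\<in>A. \<Sum>g\<in>B. (L f * P f a) * K a b * (Q g b * R g))"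
    by (rule sum.cong[OF refl], rule sum.swap)
  also have "\<dots> = (\<Sum>a\<in>C. \<Sum>b\<in>D. (\<Sum>f\<in>A. L f * P f a) * K a b * (\<Sum>g\<in>B. Q g b * R g))"
    by (simp add: sum_distrib_left sum_distrib_right mult_ac)
  finally show ?thesis .
qed

lemma gram_quad:
  fixes c e :: "nat \<Rightarrow> complex" and b :: "nat \<Rightarrow> 'a \<Rightarrow> complex"
  shows "(\<Sum>k\<in>K. cnj (\<Sum>i<n. c i * b i k) * (\<Sum>j<n. e j * b j k)) =
         (\<Sum>i<n. \<Sum>j<n. cnj (c i) * (\<Sum>k\<in>K. cnj (b i k) * b j k) * e j)"
proof -
  have "(\<Sum>i<n. \<Sum>j<n. cnj (c i) * (\<Sum>k\<in>K. cnj (b i k) * b j k) * e j) =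
        (\<Sum>k\<in>K. (\<Sum>i<n. cnj (c i) * cnj (b i k)) * (\<Sum>j<n. b j k * e j))"
    by (rule sum_sandwich)
  thus ?thesis by (simp add: mult.commute)
qed

lemma sum_sq_zero:
  fixes r :: "'a \<Rightarrow> complex"
  assumes "finite A" "(\<Sum>f\<in>A. cnj (r f) * r f) = 0" "f \<in> A"
  shows "r f = 0"
proof -
  have "(\<Sum>f\<in>A. cnj (r f) * r f) = complex_of_real (\<Sum>f\<in>A. (cmod (r f))^2)"
    unfolding of_real_sum by (rule sum.cong[OF refl]) (subst complex_norm_square, rule mult.commute)
  hence "(\<Sum>f\<in>A. (cmod (r f))^2) = 0" using assms(2) by (metis of_real_eq_0_iff)
  hence "(cmod (r f))^2 = 0" using assms(1,3) sum_nonneg_eq_0_iff[of A "\<lambda>f. (cmod (r f))^2"] by simp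
  thus ?thesis by simp
qed

locale thm1 =
  fixes d m :: nat and \<chi> :: "nat \<Rightarrow> nat \<Rightarrow> complex"
  assumes m2: "2 \<le> m"
    and unit: "\<forall>i<d. unit_vec {..<d} (\<chi> i)"
    and indep: "lin_indep_on {..<d} {..<d} \<chi>"
    and span: "spans_on {..<d} {..<d} \<chi>"
begin

definition Y :: "nat \<Rightarrow> nat \<Rightarrow> complex" where
  "Y i a = (SOME c. \<forall>x\<in>{..<d}. (if x = a then 1 else 0) = (\<Sum>s\<in>{..<d}. c s * \<chi> s x)) i"

lemma Y_prop: "x < d \<Longrightarrow> (if x = a then 1 else 0) = (\<Sum>s<d. Y s a * \<chi> s x)"
proof -
  assume x: "x < d"
  have "\<exists>c. \<forall>x\<in>{..<d}. (\<lambda>x. if x = a then 1 else 0 :: complex) x = (\<Sum>s\<in>{..<d}. c s * \<chi> s x)"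
    using spec[OF span[unfolded spans_on_def], of "\<lambda>x. if x = a then 1 else 0 :: complex"] by simp
  hence "\<forall>x\<in>{..<d}. (if x = a then 1 else 0 :: complex) =
      (\<Sum>s\<in>{..<d}. (SOME c. \<forall>x\<in>{..<d}. (if x = a then 1 else 0) = (\<Sum>s\<in>{..<d}. c s * \<chi> s x)) s * \<chi> s x)"
    by (rule someI_ex)
  thus ?thesis using x unfolding Y_def by simp
qed

definition coef :: "(nat \<Rightarrow> complex) \<Rightarrow> nat \<Rightarrow> complex" where
  "coef v i = (\<Sum>a<d. Y i a * v a)"

lemma expand: "x < d \<Longrightarrow> v x = (\<Sum>i<d. coef v i * \<chi> i x)"
proof -
  assume x: "x < d"
  have "(\<Sum>i<d. coef v i * \<chi> i x) = (\<Sum>i<d. \<Sum>a<d. Y i a * v a * \<chi> i x)"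
    unfolding coef_def by (simp add: sum_distrib_right)
  also have "\<dots> = (\<Sum>a<d. \<Sum>i<d. Y i a * v a * \<chi> i x)" by (rule sum.swap)
  also have "\<dots> = (\<Sum>a<d. v a * (\<Sum>i<d. Y i a * \<chi> i x))"
    by (simp add: sum_distrib_left mult_ac)
  also have "\<dots> = (\<Sum>a<d. v a * (if x = a then 1 else 0))"
    using Y_prop[OF x] by simp
  also have "\<dots> = v x" using x by (subst sum_one_pt[of _ x]) auto
  finally show ?thesis by simp
qed

lemma uniq:
  assumes "\<forall>x<d. v x = (\<Sum>i<d. c i * \<chi> i x)" "i < d"
  shows "c i = coef v i"
proof -
  have z: "\<forall>x\<in>{..<d}. (\<Sum>s\<in>{..<d}. (c s - coef v s) * \<chi> s x) = 0"
  proof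
    fix x assume "x \<in> {..<d}"
    hence x: "x < d" by simp
    have "(\<Sum>s\<in>{..<d}. (c s - coef v s) * \<chi> s x) =
        (\<Sum>s<d. c s * \<chi> s x) - (\<Sum>s<d. coef v s * \<chi> s x)"
      by (simp add: left_diff_distrib sum_subtractf)
    also have "\<dots> = v x - v x" using assms(1) x expand[OF x, of v] by simp
    finally show "(\<Sum>s\<in>{..<d}. (c s - coef v s) * \<chi> s x) = 0" by simp
  qed
  have ind: "\<And>c. (\<forall>x\<in>{..<d}. (\<Sum>s\<in>{..<d}. c s * \<chi> s x) = 0) \<Longrightarrow> \<forall>s\<in>{..<d}. c s = 0"
    using indep unfolding lin_indep_on_def by blast
  have "\<forall>s\<in>{..<d}. c s - coef v s = 0" by (rule ind[of "\<lambda>s. c s - coef v s", OF z])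
  thus ?thesis using assms(2) by simp
qed

definition G :: "nat \<Rightarrow> nat \<Rightarrow> complex" where
  "G i j = (\<Sum>x<d. cnj (\<chi> i x) * \<chi> j x)"

lemma G_diag: "i < d \<Longrightarrow> G i i = 1"
  using unit unfolding G_def unit_vec_def inner_on_def by simp

definition norm2 :: "(nat \<Rightarrow> complex) \<Rightarrow> real" where
  "norm2 u = (\<Sum>x<d. (cmod (u x))^2)"

lemma norm2_eq: "(\<Sum>x<d. cnj (u x) * u x) = complex_of_real (norm2 u)"
  unfolding norm2_def of_real_sum by (rule sum.cong[OF refl]) (subst complex_norm_square, rule mult.commute)

lemma norm2_nonneg: "0 \<le> norm2 u" unfolding norm2_def by (simp add: sum_nonneg)

lemma cmod_le_norm2: "a < d \<Longrightarrow> cmod (u a) \<le> sqrt (norm2 u)"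
proof -
  assume a: "a < d"
  have "(cmod (u a))^2 \<le> norm2 u" unfolding norm2_def
    using a by (intro member_le_sum) auto
  thus ?thesis by (simp add: real_le_rsqrt)
qed

definition F0 :: real where "F0 = (\<Sum>i<d. (\<Sum>a<d. cmod (Y i a))^2)"

lemma F0_nonneg: "0 \<le> F0" unfolding F0_def by (simp add: sum_nonneg)

lemma coef_bound: "(\<Sum>i<d. (cmod (coef u i))^2) \<le> F0 * norm2 u"
proof -
  have "\<And>i. (cmod (coef u i))^2 \<le> (\<Sum>a<d. cmod (Y i a))^2 * norm2 u"
  proof -
    fix i
    have "cmod (coef u i) \<le> (\<Sum>a<d. cmod (Y i a) * cmod (u a))"
      unfolding coef_def by (rule order.trans[OF norm_sum]) (simp add: norm_mult)
    also have "\<dots> \<le> (\<Sum>a<d. cmod (Y i a) * sqrt (norm2 u))"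
      by (intro sum_mono mult_left_mono cmod_le_norm2) auto
    also have "\<dots> = (\<Sum>a<d. cmod (Y i a)) * sqrt (norm2 u)" by (simp add: sum_distrib_right)
    finally have "cmod (coef u i) \<le> (\<Sum>a<d. cmod (Y i a)) * sqrt (norm2 u)" .
    hence "(cmod (coef u i))^2 \<le> ((\<Sum>a<d. cmod (Y i a)) * sqrt (norm2 u))^2"
      by (intro power_mono) auto
    also have "\<dots> = (\<Sum>a<d. cmod (Y i a))^2 * norm2 u"
      using norm2_nonneg by (simp add: power_mult_distrib)
    finally show "(cmod (coef u i))^2 \<le> (\<Sum>a<d. cmod (Y i a))^2 * norm2 u" .
  qed
  hence "(\<Sum>i<d. (cmod (coef u i))^2) \<le> (\<Sum>i<d. (\<Sum>a<d. cmod (Y i a))^2 * norm2 u)"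
    by (intro sum_mono) auto
  also have "\<dots> = F0 * norm2 u" unfolding F0_def by (simp add: sum_distrib_right)
  finally show ?thesis .
qed

definition eps :: real where "eps = 1 / (2 * (F0 + 1))"

lemma eps_pos: "0 < eps" and eps_le: "eps \<le> 1/2"
  using F0_nonneg by (auto simp: eps_def field_simps)

definition G' :: "nat \<Rightarrow> nat \<Rightarrow> complex" where
  "G' i j = (G i j - (if i = j then complex_of_real eps else 0)) / complex_of_real (1 - eps)"

lemma quad_G: "(\<Sum>i<d. \<Sum>j<d. cnj (c i) * G i j * c j) =
     complex_of_real (norm2 (\<lambda>x. \<Sum>j<d. c j * \<chi> j x))"
  unfolding G_def norm2_eq[symmetric] by (rule gram_quad[symmetric])

lemma quad_G': "(1 - eps) * Re (\<Sum>i<d. \<Sum>j<d. cnj (c i) * G' i j * c j) \<ge>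
     norm2 (\<lambda>x. \<Sum>j<d. c j * \<chi> j x) / 2"
proof -
  define u where "u = (\<lambda>x. \<Sum>j<d. c j * \<chi> j x)"
  have ne: "1 - eps \<noteq> 0" using eps_le by simp
  have "(\<Sum>i<d. \<Sum>j<d. cnj (c i) * G' i j * c j) =
     ((\<Sum>i<d. \<Sum>j<d. cnj (c i) * G i j * c j) - complex_of_real eps * (\<Sum>i<d. cnj (c i) * c i))
       / complex_of_real (1 - eps)"
  proof -
    have "(\<Sum>i<d. \<Sum>j<d. cnj (c i) * G' i j * c j) =
       (\<Sum>i<d. \<Sum>j<d. (cnj (c i) * G i j * c j - (if i = j then complex_of_real eps * (cnj (c i) * c i) else 0))
          / complex_of_real (1 - eps))"
      unfolding G'_def by (rule sum.cong[OF refl])+ (auto simp: field_simps)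
    also have "\<dots> = ((\<Sum>i<d. \<Sum>j<d. cnj (c i) * G i j * c j) - complex_of_real eps * (\<Sum>i<d. cnj (c i) * c i))
       / complex_of_real (1 - eps)"
      by (simp add: sum_divide_distrib[symmetric] sum_subtractf sum_distrib_left)
    finally show ?thesis .
  qed
  also have "(\<Sum>i<d. cnj (c i) * c i) = complex_of_real (\<Sum>i<d. (cmod (c i))^2)"
    unfolding of_real_sum by (rule sum.cong[OF refl]) (subst complex_norm_square, rule mult.commute)
  finally have e: "(\<Sum>i<d. \<Sum>j<d. cnj (c i) * G' i j * c j) =
      complex_of_real ((norm2 u - eps * (\<Sum>i<d. (cmod (c i))^2)) / (1 - eps))"
    unfolding quad_G u_def by simp
  have cc: "\<And>i. i < d \<Longrightarrow> c i = coef u i" using uniq[of u c] unfolding u_def by auto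
  have "(\<Sum>i<d. (cmod (c i))^2) = (\<Sum>i<d. (cmod (coef u i))^2)" using cc by simp
  also have "\<dots> \<le> F0 * norm2 u" by (rule coef_bound)
  finally have b: "(\<Sum>i<d. (cmod (c i))^2) \<le> F0 * norm2 u" .
  have "eps * (\<Sum>i<d. (cmod (c i))^2) \<le> eps * (F0 * norm2 u)"
    using eps_pos b by (intro mult_left_mono) auto
  also have "\<dots> \<le> norm2 u / 2"
  proof -
    have "eps * (F0 * norm2 u) = (F0 / (2 * (F0 + 1))) * norm2 u" by (simp add: eps_def)
    also have "\<dots> \<le> (1/2) * norm2 u"
      using F0_nonneg norm2_nonneg[of u] by (intro mult_right_mono) (auto simp: field_simps)
    finally show ?thesis by simp
  qed
  finally have "norm2 u / 2 \<le> norm2 u - eps * (\<Sum>i<d. (cmod (c i))^2)" by simp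
  thus ?thesis unfolding e u_def[symmetric] using ne by simp
qed

lemma G'_psd: "psd d G'"
  unfolding psd_def
proof (intro conjI allI impI)
  fix x y assume "x < d" "y < d"
  show "G' y x = cnj (G' x y)" unfolding G'_def G_def by (simp add: mult.commute)
next
  fix c :: "nat \<Rightarrow> complex"
  have "0 \<le> norm2 (\<lambda>x. \<Sum>j<d. c j * \<chi> j x) / 2" using norm2_nonneg by simp
  also have "\<dots> \<le> (1 - eps) * Re (\<Sum>i<d. \<Sum>j<d. cnj (c i) * G' i j * c j)" by (rule quad_G')
  finally show "0 \<le> Re (\<Sum>x<d. \<Sum>y<d. cnj (c x) * G' x y * c y)"
    using eps_le by (simp add: zero_le_mult_iff)
qed

lemma G'_pd:
  assumes "(\<Sum>i<d. \<Sum>j<d. cnj (c i) * G' i j * c j) = 0" "i < d"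
  shows "c i = 0"
proof -
  define u where "u = (\<lambda>x. \<Sum>j<d. c j * \<chi> j x)"
  have "norm2 u / 2 \<le> 0" using quad_G'[of c] assms(1) unfolding u_def by simp
  hence "norm2 u = 0" using norm2_nonneg[of u] by simp
  hence "\<forall>x\<in>{..<d}. (cmod (u x))^2 = 0"
    unfolding norm2_def by (subst sum_nonneg_eq_0_iff[symmetric]) auto
  hence u0: "\<forall>x<d. u x = 0" by simp
  have "c i = coef u i" using uniq[of u c i] assms(2) unfolding u_def by auto
  also have "\<dots> = 0" unfolding coef_def using u0 by simp
  finally show ?thesis .
qed

lemma G'_diag: "i < d \<Longrightarrow> G' i i = 1"
  using eps_le by (simp add: G'_def G_diag)

end

lemma prod_two_pt:
  assumes "finite A" "a \<in> A" "b \<in> A" "a \<noteq> b" "\<forall>x\<in>A. x \<noteq> a \<and> x \<noteq> b \<longrightarrow> f x = 1"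
  shows "prod f A = f a * f b"
proof -
  have "prod f A = prod f {a,b}"
    using assms by (intro prod.mono_neutral_right) auto
  thus ?thesis using assms by simp
qed

context thm1 begin

definition W :: "nat \<Rightarrow> nat \<Rightarrow> complex" where
  "W = (SOME w. \<forall>x<d. \<forall>y<d. G' x y = (\<Sum>k<d. w k x * cnj (w k y)))"

lemma W_prop: "x < d \<Longrightarrow> y < d \<Longrightarrow> G' x y = (\<Sum>k<d. W k x * cnj (W k y))"
  using someI_ex[OF chol[OF G'_psd]] unfolding W_def by blast

definition a :: "nat \<Rightarrow> nat \<Rightarrow> complex" where "a i k = cnj (W k i)"

lemma a_gram: "i < d \<Longrightarrow> j < d \<Longrightarrow> (\<Sum>k<d. cnj (a i k) * a j k) = G' i j"
  by (simp add: a_def W_prop)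

lemma a_indep:
  assumes "\<forall>k<d. (\<Sum>j<d. c j * a j k) = 0" "i < d"
  shows "c i = 0"
proof (rule G'_pd[OF _ assms(2)])
  have "(\<Sum>k\<in>{..<d}. cnj (\<Sum>i<d. c i * a i k) * (\<Sum>j<d. c j * a j k)) =
     (\<Sum>i<d. \<Sum>j<d. cnj (c i) * (\<Sum>k\<in>{..<d}. cnj (a i k) * a j k) * c j)"
    by (rule gram_quad)
  also have "\<dots> = (\<Sum>i<d. \<Sum>j<d. cnj (c i) * G' i j * c j)"
    by (intro sum.cong refl) (simp add: a_gram)
  finally show "(\<Sum>i<d. \<Sum>j<d. cnj (c i) * G' i j * c j) = 0" using assms(1) by simp
qed

lemma a_nz: "i < d \<Longrightarrow> \<exists>k<d. a i k \<noteq> 0"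
proof (rule ccontr)
  assume i: "i < d" and "\<not> (\<exists>k<d. a i k \<noteq> 0)"
  hence "(\<Sum>k<d. cnj (a i k) * a i k) = 0" by simp
  thus False using a_gram[OF i i] G'_diag[OF i] by simp
qed

definition t :: real where "t = sqrt (1 - eps)"
definition s :: real where "s = sqrt eps"

lemma t_pos: "0 < t" and s_pos: "0 < s" using eps_pos eps_le by (auto simp: t_def s_def)

lemma tt: "complex_of_real t * complex_of_real t = complex_of_real (1 - eps)"
  using eps_le by (simp del: of_real_mult add: of_real_mult[symmetric] t_def)

lemma ts: "complex_of_real t * complex_of_real t + complex_of_real s * complex_of_real s = 1"
  using eps_le eps_pos by (simp del: of_real_mult add: of_real_mult[symmetric] t_def s_def)

definition alpha :: "nat \<Rightarrow> complex" where
  "alpha y = (if y = 0 then complex_of_real t else if y = 1 then complex_of_real s else 0)"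

definition phi :: "nat \<Rightarrow> nat \<Rightarrow> nat \<Rightarrow> complex" where
  "phi i l y = (if l = 0 then a i y else if l = Suc i then alpha y else if y = 0 then 1 else 0)"

definition V :: "nat \<Rightarrow> (nat \<Rightarrow> nat) \<Rightarrow> complex" where
  "V i f = (\<Prod>l<Suc d. phi i l (f l))"

abbreviation "M \<equiv> mp_idx (Suc d) (sys_anc_dims d m)"

lemma M_eq: "M = PiE {..<Suc d} (\<lambda>l. {..<sys_anc_dims d m l})" by (simp add: mp_idx_def)

lemma finite_M: "finite M" unfolding M_eq by (intro finite_PiE) auto

lemma fac:
  assumes "i < d" "j < d"
  shows "(\<Sum>y\<in>{..<sys_anc_dims d m (Suc l)}. cnj (phi i (Suc l) y) * phi j (Suc l) y) =
     (if l = i \<and> l = j then 1 else if l = i \<or> l = j then complex_of_real t else 1)"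
proof -
  have m0: "0 \<in> {..<m}" "1 \<in> {..<m}" using m2 by auto
  have dm: "sys_anc_dims d m (Suc l) = m" by (simp add: sys_anc_dims_def)
  show ?thesis
  proof (cases "l = i")
    case li: True
    show ?thesis
    proof (cases "l = j")
      case True
      have "(\<Sum>y\<in>{..<m}. cnj (alpha y) * alpha y) = cnj (alpha 0) * alpha 0 + cnj (alpha 1) * alpha 1"
        by (rule sum_two_pt) (use m0 in \<open>auto simp: alpha_def\<close>)
      thus ?thesis using li True ts by (simp add: sys_anc_dims_def phi_def alpha_def)
    next
      case False
      have "(\<Sum>y\<in>{..<m}. cnj (alpha y) * (if y = 0 then 1 else 0)) = cnj (alpha 0)"
        by (subst sum_one_pt[of _ 0]) (use m0 in auto)
      thus ?thesis using li False by (simp add: sys_anc_dims_def phi_def alpha_def)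
    qed
  next
    case li: False
    show ?thesis
    proof (cases "l = j")
      case True
      have "(\<Sum>y\<in>{..<m}. cnj (if y = 0 then 1 else 0) * alpha y) = alpha 0"
        by (subst sum_one_pt[of _ 0]) (use m0 in auto)
      thus ?thesis using li True by (simp add: sys_anc_dims_def phi_def alpha_def)
    next
      case False
      have "(\<Sum>y\<in>{..<m}. cnj (if y = 0 then 1 else 0) * (if y = 0 then 1 else (0::complex))) = 1"
        by (subst sum_one_pt[of _ 0]) (use m0 in auto)
      thus ?thesis using li False by (simp add: sys_anc_dims_def phi_def)
    qed
  qed
qed

lemma V_gram:
  assumes i: "i < d" and j: "j < d"
  shows "(\<Sum>f\<in>M. cnj (V i f) * V j f) = G i j"
proof -
  define g where "g l = (\<Sum>y\<in>{..<sys_anc_dims d m l}. cnj (phi i l y) * phi j l y)" for l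
  have "(\<Sum>f\<in>M. cnj (V i f) * V j f) = (\<Sum>f\<in>M. \<Prod>l<Suc d. cnj (phi i l (f l)) * phi j l (f l))"
    by (simp add: V_def prod.distrib)
  also have "\<dots> = (\<Prod>l<Suc d. g l)"
    unfolding M_eq g_def by (rule prod_sum_PiE[symmetric]) auto
  also have "\<dots> = g 0 * (\<Prod>l<d. g (Suc l))" by (rule prod.lessThan_Suc_shift)
  also have "g 0 = G' i j" unfolding g_def using a_gram[OF i j] by (simp add: sys_anc_dims_def phi_def)
  also have "(\<Prod>l<d. g (Suc l)) = (\<Prod>l<d. (if l = i \<and> l = j then 1 else if l = i \<or> l = j then complex_of_real t else 1))"
    unfolding g_def by (intro prod.cong refl fac i j)
  also have "G' i j * \<dots> = G i j"
  proof (cases "i = j")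
    case True
    have "(\<Prod>l<d. (if l = i \<and> l = j then 1 else if l = i \<or> l = j then complex_of_real t else 1)) = 1"
      using True by (intro prod.neutral) auto
    thus ?thesis using True G'_diag[OF i] G_diag[OF i] by simp
  next
    case False
    have "(\<Prod>l<d. (if l = i \<and> l = j then 1 else if l = i \<or> l = j then complex_of_real t else 1))
        = complex_of_real t * complex_of_real t"
      by (subst prod_two_pt[of _ i j]) (use False i j in auto)
    thus ?thesis using False eps_le by (simp add: tt G'_def)
  qed
  finally show ?thesis .
qed

definition Lam :: "(nat \<Rightarrow> nat) \<Rightarrow> nat \<Rightarrow> complex" where
  "Lam f x = (\<Sum>i<d. Y i x * V i f)"

definition app :: "(nat \<Rightarrow> complex) \<Rightarrow> (nat \<Rightarrow> nat) \<Rightarrow> complex" where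
  "app \<psi> f = (\<Sum>x<d. Lam f x * \<psi> x)"

lemma app_eq: "app \<psi> f = (\<Sum>i<d. coef \<psi> i * V i f)"
proof -
  have "app \<psi> f = (\<Sum>x<d. \<Sum>i<d. Y i x * \<psi> x * V i f)"
    unfolding app_def Lam_def by (simp add: sum_distrib_right sum_distrib_left mult_ac)
  also have "\<dots> = (\<Sum>i<d. \<Sum>x<d. Y i x * \<psi> x * V i f)" by (rule sum.swap)
  also have "\<dots> = (\<Sum>i<d. coef \<psi> i * V i f)"
    unfolding coef_def by (simp add: sum_distrib_right)
  finally show ?thesis .
qed

lemma inner_pres: "(\<Sum>f\<in>M. cnj (app \<psi> f) * app \<phi> f) = (\<Sum>x<d. cnj (\<psi> x) * \<phi> x)"
proof -
  have "(\<Sum>f\<in>M. cnj (app \<psi> f) * app \<phi> f) =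
     (\<Sum>f\<in>M. cnj (\<Sum>i<d. coef \<psi> i * V i f) * (\<Sum>j<d. coef \<phi> j * V j f))"
    by (simp only: app_eq)
  also have "\<dots> = (\<Sum>i<d. \<Sum>j<d. cnj (coef \<psi> i) * (\<Sum>f\<in>M. cnj (V i f) * V j f) * coef \<phi> j)"
    by (rule gram_quad)
  also have "\<dots> = (\<Sum>i<d. \<Sum>j<d. cnj (coef \<psi> i) * (\<Sum>x\<in>{..<d}. cnj (\<chi> i x) * \<chi> j x) * coef \<phi> j)"
    by (intro sum.cong refl) (simp add: V_gram G_def)
  also have "\<dots> = (\<Sum>x\<in>{..<d}. cnj (\<Sum>i<d. coef \<psi> i * \<chi> i x) * (\<Sum>j<d. coef \<phi> j * \<chi> j x))"
    by (rule gram_quad[symmetric])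
  also have "\<dots> = (\<Sum>x<d. cnj (\<psi> x) * \<phi> x)"
    by (intro sum.cong refl) (simp add: expand[symmetric])
  finally show ?thesis .
qed

lemma Lam_app: "b < d \<Longrightarrow> app (\<lambda>x. if x = b then 1 else 0) f = Lam f b"
  unfolding app_def by (subst sum_one_pt[of _ b]) auto

lemma isometry: "isometry_on {..<d} M Lam"
  unfolding isometry_on_def
proof (intro ballI)
  fix b c assume "b \<in> {..<d}" "c \<in> {..<d}"
  hence b: "b < d" and c: "c < d" by auto
  have "(\<Sum>f\<in>M. cnj (Lam f b) * Lam f c) =
      (\<Sum>f\<in>M. cnj (app (\<lambda>x. if x = b then 1 else 0) f) * app (\<lambda>x. if x = c then 1 else 0) f)"
    by (simp only: Lam_app[OF b] Lam_app[OF c])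
  also have "\<dots> = (\<Sum>x<d. cnj (if x = b then 1 else 0) * (if x = c then 1 else 0))"
    by (rule inner_pres)
  also have "\<dots> = (if b = c then 1 else 0)"
    by (subst sum_one_pt[of _ b]) (use b in auto)
  finally show "(\<Sum>f\<in>M. cnj (Lam f b) * Lam f c) = (if b = c then 1 else 0)" .
qed

end

lemma prod_one_pt:
  assumes "finite A" "a \<in> A" "\<forall>x\<in>A. x \<noteq> a \<longrightarrow> f x = 1"
  shows "prod f A = f a"
proof -
  have "prod f A = prod f {a}"
    using assms by (intro prod.mono_neutral_right) auto
  thus ?thesis by simp
qed

lemma prod_generic:
  fixes v :: "(nat \<Rightarrow> nat) \<Rightarrow> complex" and F :: "(nat \<Rightarrow> nat) \<Rightarrow> complex"
  assumes B0: "B0 \<subseteq> {..<N}" "B0 \<noteq> {}"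
    and eq: "\<forall>f\<in>mp_idx N dims. v f = F (restrict f B0) * (\<Prod>l\<in>{..<N} - B0. h l (f l))"
  shows "producible_pure N dims (card B0) v"
proof -
  define R where "R = {..<N} - B0"
  define P where "P = insert B0 ((\<lambda>l. {l}) ` R)"
  define \<phi> where "\<phi> = (\<lambda>B (g :: nat \<Rightarrow> nat). if B = B0 then F g else h (the_elem B) (g (the_elem B)))"
  have fin: "finite B0" using B0(1) finite_subset by blast
  have c1: "1 \<le> card B0" using fin B0(2) by (simp add: Suc_le_eq card_gt_0_iff)
  have nB0: "\<And>l. l \<in> R \<Longrightarrow> {l} \<noteq> B0" unfolding R_def by auto
  have part: "partition_on {..<N} P"
    unfolding partition_on_def disjoint_def P_def R_def using B0 by auto
  have card: "\<forall>B\<in>P. card B \<le> card B0" unfolding P_def using c1 by auto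
  have prod: "\<forall>f\<in>mp_idx N dims. v f = (\<Prod>B\<in>P. \<phi> B (restrict f B))"
  proof
    fix f assume f: "f \<in> mp_idx N dims"
    have nin: "B0 \<notin> (\<lambda>l. {l}) ` R" using nB0 by auto
    have "(\<Prod>B\<in>P. \<phi> B (restrict f B)) = \<phi> B0 (restrict f B0) * (\<Prod>B\<in>(\<lambda>l. {l}) ` R. \<phi> B (restrict f B))"
      unfolding P_def using nin by (simp add: R_def)
    also have "(\<Prod>B\<in>(\<lambda>l. {l}) ` R. \<phi> B (restrict f B)) = (\<Prod>l\<in>R. \<phi> {l} (restrict f {l}))"
      by (subst prod.reindex) (auto simp: inj_on_def)
    also have "\<dots> = (\<Prod>l\<in>R. h l (f l))"
      by (intro prod.cong refl) (simp add: \<phi>_def nB0)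
    also have "\<phi> B0 (restrict f B0) = F (restrict f B0)" by (simp add: \<phi>_def)
    finally have calc: "(\<Prod>B\<in>P. \<phi> B (restrict f B)) = F (restrict f B0) * (\<Prod>l\<in>R. h l (f l))" .
    have "v f = F (restrict f B0) * (\<Prod>l\<in>R. h l (f l))" using eq f unfolding R_def by blast
    thus "v f = (\<Prod>B\<in>P. \<phi> B (restrict f B))" using calc by simp
  qed
  show ?thesis unfolding producible_pure_def using part card prod by blast
qed

lemma producible_pure_mono:
  "producible_pure N dims k v \<Longrightarrow> k \<le> k' \<Longrightarrow> producible_pure N dims k' v"
  unfolding producible_pure_def by (meson order.trans)

lemma producible_pure_zero:
  assumes "0 < N" shows "\<not> producible_pure N dims 0 v"
proof
  assume "producible_pure N dims 0 v"
  then obtain P where P: "partition_on {..<N} P" "\<forall>B\<in>P. card B \<le> 0"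
    unfolding producible_pure_def by blast
  have "\<forall>B\<in>P. B = {}"
  proof
    fix B assume B: "B \<in> P"
    hence "B \<subseteq> {..<N}" using P(1) unfolding partition_on_def by auto
    hence "finite B" using finite_subset by blast
    thus "B = {}" using P(2) B by auto
  qed
  hence "P = {}" using P(1) unfolding partition_on_def by auto
  thus False using P(1) assms unfolding partition_on_def by auto
qed

context thm1 begin

definition supp :: "(nat \<Rightarrow> complex) \<Rightarrow> nat set" where
  "supp \<psi> = {i. i < d \<and> coef \<psi> i \<noteq> 0}"

lemma supp_sub: "supp \<psi> \<subseteq> {..<d}" unfolding supp_def by auto
lemma finite_supp: "finite (supp \<psi>)" using supp_sub finite_subset by blast

lemma expand_supp: "x < d \<Longrightarrow> \<psi> x = (\<Sum>s\<in>supp \<psi>. coef \<psi> s * \<chi> s x)"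
proof -
  assume x: "x < d"
  have "\<psi> x = (\<Sum>s<d. coef \<psi> s * \<chi> s x)" by (rule expand[OF x])
  also have "\<dots> = (\<Sum>s\<in>supp \<psi>. coef \<psi> s * \<chi> s x)"
    by (rule sum.mono_neutral_right) (auto simp: supp_def)
  finally show ?thesis .
qed

lemma NR_eq: "nonclassical_rank {..<d} {..<d} \<chi> \<psi> = card (supp \<psi>)"
  unfolding nonclassical_rank_def
proof (rule Least_equality)
  show "\<exists>S\<subseteq>{..<d}. card S = card (supp \<psi>) \<and>
      (\<exists>c. (\<forall>s\<in>S. c s \<noteq> 0) \<and> (\<forall>x\<in>{..<d}. \<psi> x = (\<Sum>s\<in>S. c s * \<chi> s x)))"
    using supp_sub expand_supp by (intro exI[of _ "supp \<psi>"] conjI exI[of _ "coef \<psi>"]) (auto simp: supp_def)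
next
  fix r assume "\<exists>S\<subseteq>{..<d}. card S = r \<and>
      (\<exists>c. (\<forall>s\<in>S. c s \<noteq> 0) \<and> (\<forall>x\<in>{..<d}. \<psi> x = (\<Sum>s\<in>S. c s * \<chi> s x)))"
  then obtain S c where S: "S \<subseteq> {..<d}" "card S = r" "\<forall>s\<in>S. c s \<noteq> 0"
    "\<forall>x\<in>{..<d}. \<psi> x = (\<Sum>s\<in>S. c s * \<chi> s x)" by blast
  define c' where "c' = (\<lambda>i. if i \<in> S then c i else 0)"
  have "\<forall>x<d. \<psi> x = (\<Sum>i<d. c' i * \<chi> i x)"
  proof (intro allI impI)
    fix x assume "x < d"
    hence "\<psi> x = (\<Sum>s\<in>S. c s * \<chi> s x)" using S(4) by auto
    also have "\<dots> = (\<Sum>s\<in>S. c' s * \<chi> s x)" by (intro sum.cong refl) (simp add: c'_def)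
    also have "\<dots> = (\<Sum>i<d. c' i * \<chi> i x)"
      by (rule sum.mono_neutral_left) (use S(1) in \<open>auto simp: c'_def\<close>)
    finally show "\<psi> x = (\<Sum>i<d. c' i * \<chi> i x)" .
  qed
  hence cc: "\<And>i. i < d \<Longrightarrow> c' i = coef \<psi> i" using uniq by blast
  have "S = supp \<psi>"
  proof (intro set_eqI iffI)
    fix i assume "i \<in> S"
    thus "i \<in> supp \<psi>" using S(1,3) cc[of i] by (auto simp: supp_def c'_def)
  next
    fix i assume "i \<in> supp \<psi>"
    thus "i \<in> S" using cc[of i] by (auto simp: supp_def c'_def split: if_splits)
  qed
  thus "card (supp \<psi>) \<le> r" using S(2) by simp
qed

lemma supp_nonempty: "unit_vec {..<d} \<psi> \<Longrightarrow> supp \<psi> \<noteq> {}"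
proof
  assume u: "unit_vec {..<d} \<psi>" and e: "supp \<psi> = {}"
  have "\<forall>x<d. \<psi> x = 0" using expand_supp[of _ \<psi>] e by simp
  hence "inner_on {..<d} \<psi> \<psi> = 0" unfolding inner_on_def by simp
  thus False using u unfolding unit_vec_def by simp
qed

lemma app_supp: "app \<psi> f = (\<Sum>i\<in>supp \<psi>. coef \<psi> i * V i f)"
  unfolding app_eq by (rule sum.mono_neutral_right) (auto simp: supp_def)

lemma prod_one:
  assumes "supp \<psi> = {i}"
  shows "producible_pure (Suc d) (sys_anc_dims d m) 1 (app \<psi>)"
proof -
  have "producible_pure (Suc d) (sys_anc_dims d m) (card {0::nat}) (app \<psi>)"
  proof (rule prod_generic[where F = "\<lambda>g. coef \<psi> i * phi i 0 (g 0)" and h = "phi i"])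
    show "\<forall>f\<in>M. app \<psi> f = coef \<psi> i * phi i 0 (restrict f {0} 0) * (\<Prod>l\<in>{..<Suc d} - {0}. phi i l (f l))"
    proof
      fix f
      have "app \<psi> f = coef \<psi> i * V i f" by (simp add: app_supp assms)
      also have "V i f = phi i 0 (f 0) * (\<Prod>l\<in>{..<Suc d} - {0}. phi i l (f l))"
        unfolding V_def by (subst prod.remove[of _ 0]) auto
      finally show "app \<psi> f = coef \<psi> i * phi i 0 (restrict f {0} 0) * (\<Prod>l\<in>{..<Suc d} - {0}. phi i l (f l))"
        by (simp add: mult.assoc)
    qed
  qed auto
  thus ?thesis by simp
qed

lemma prod_gen:
  assumes "supp \<psi> \<noteq> {}"
  shows "producible_pure (Suc d) (sys_anc_dims d m) (card (supp \<psi>) + 1) (app \<psi>)"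
proof -
  define S where "S = supp \<psi>"
  define B0 where "B0 = insert 0 (Suc ` S)"
  have Sd: "S \<subseteq> {..<d}" unfolding S_def by (rule supp_sub)
  have B0sub: "B0 \<subseteq> {..<Suc d}" using Sd unfolding B0_def by auto
  have cB0: "card B0 = card S + 1"
  proof -
    have "finite S" unfolding S_def by (rule finite_supp)
    moreover have "0 \<notin> Suc ` S" by auto
    ultimately show ?thesis unfolding B0_def by (simp add: card_image)
  qed
  have "producible_pure (Suc d) (sys_anc_dims d m) (card B0) (app \<psi>)"
  proof (rule prod_generic[where F = "\<lambda>g. \<Sum>i\<in>S. coef \<psi> i * (\<Prod>l\<in>B0. phi i l (g l))"
        and h = "\<lambda>l y. if y = 0 then 1 else 0"])
    show "B0 \<subseteq> {..<Suc d}" by (rule B0sub)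
    show "B0 \<noteq> {}" unfolding B0_def by simp
    show "\<forall>f\<in>M. app \<psi> f = (\<Sum>i\<in>S. coef \<psi> i * (\<Prod>l\<in>B0. phi i l (restrict f B0 l))) *
        (\<Prod>l\<in>{..<Suc d} - B0. if f l = 0 then 1 else 0)"
    proof
      fix f
      have "\<And>i. i \<in> S \<Longrightarrow> V i f = (\<Prod>l\<in>B0. phi i l (f l)) * (\<Prod>l\<in>{..<Suc d} - B0. if f l = 0 then 1 else 0)"
      proof -
        fix i assume i: "i \<in> S"
        have "V i f = (\<Prod>l\<in>{..<Suc d} - B0. phi i l (f l)) * (\<Prod>l\<in>B0. phi i l (f l))"
          unfolding V_def by (rule prod.subset_diff[OF B0sub]) simp
        also have "(\<Prod>l\<in>{..<Suc d} - B0. phi i l (f l)) = (\<Prod>l\<in>{..<Suc d} - B0. if f l = 0 then 1 else 0)"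
          by (intro prod.cong refl) (use i in \<open>auto simp: phi_def B0_def\<close>)
        finally show "V i f = (\<Prod>l\<in>B0. phi i l (f l)) * (\<Prod>l\<in>{..<Suc d} - B0. if f l = 0 then 1 else 0)"
          by (simp add: mult.commute)
      qed
      hence "app \<psi> f = (\<Sum>i\<in>S. coef \<psi> i * ((\<Prod>l\<in>B0. phi i l (f l)) * (\<Prod>l\<in>{..<Suc d} - B0. if f l = 0 then 1 else 0)))"
        unfolding app_supp S_def by (intro sum.cong refl) simp
      also have "\<dots> = (\<Sum>i\<in>S. coef \<psi> i * (\<Prod>l\<in>B0. phi i l (f l))) * (\<Prod>l\<in>{..<Suc d} - B0. if f l = 0 then 1 else 0)"
        by (simp add: sum_distrib_right mult.assoc)
      also have "(\<Sum>i\<in>S. coef \<psi> i * (\<Prod>l\<in>B0. phi i l (f l))) = (\<Sum>i\<in>S. coef \<psi> i * (\<Prod>l\<in>B0. phi i l (restrict f B0 l)))"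
        by (intro sum.cong refl arg_cong2[where f = "(*)"] prod.cong) auto
      finally show "app \<psi> f = (\<Sum>i\<in>S. coef \<psi> i * (\<Prod>l\<in>B0. phi i l (restrict f B0 l))) *
        (\<Prod>l\<in>{..<Suc d} - B0. if f l = 0 then 1 else 0)" .
    qed
  qed
  thus ?thesis using cB0 unfolding S_def by simp
qed

end

context thm1 begin

definition gg :: "nat \<Rightarrow> nat \<Rightarrow> nat \<Rightarrow> nat \<Rightarrow> nat" where
  "gg i p y = (\<lambda>l. if l < Suc d then (if l = 0 then p else if l = Suc i then y else 0) else undefined)"

lemma gg_M: "i < d \<Longrightarrow> p < d \<Longrightarrow> y < m \<Longrightarrow> gg i p y \<in> M"
  unfolding M_eq using m2 by (auto simp: gg_def PiE_iff sys_anc_dims_def extensional_def)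

lemma V_gg0: "j < d \<Longrightarrow> V j (gg i p 0) = a j p * complex_of_real t"
proof -
  assume j: "j < d"
  have "V j (gg i p 0) = phi j 0 p * (\<Prod>l<d. phi j (Suc l) (gg i p 0 (Suc l)))"
    unfolding V_def by (subst prod.lessThan_Suc_shift) (simp add: gg_def)
  also have "(\<Prod>l<d. phi j (Suc l) (gg i p 0 (Suc l))) = phi j (Suc j) (gg i p 0 (Suc j))"
    by (rule prod_one_pt) (use j in \<open>auto simp: phi_def gg_def\<close>)
  also have "\<dots> = complex_of_real t" using j by (simp add: phi_def gg_def alpha_def)
  finally show ?thesis by (simp add: phi_def)
qed

lemma V_gg1: "j < d \<Longrightarrow> i < d \<Longrightarrow> V j (gg i p 1) = (if j = i then a i p * complex_of_real s else 0)"
proof -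
  assume j: "j < d" and i: "i < d"
  have "V j (gg i p 1) = phi j 0 p * (\<Prod>l<d. phi j (Suc l) (gg i p 1 (Suc l)))"
    unfolding V_def by (subst prod.lessThan_Suc_shift) (simp add: gg_def)
  also have "(\<Prod>l<d. phi j (Suc l) (gg i p 1 (Suc l))) = (if j = i then complex_of_real s else 0)"
  proof (cases "j = i")
    case True
    have "(\<Prod>l<d. phi j (Suc l) (gg i p 1 (Suc l))) = phi j (Suc i) (gg i p 1 (Suc i))"
      by (rule prod_one_pt) (use i True in \<open>auto simp: phi_def gg_def\<close>)
    thus ?thesis using True i by (simp add: phi_def gg_def alpha_def)
  next
    case False
    have "phi j (Suc i) (gg i p 1 (Suc i)) = 0" using False i by (simp add: phi_def gg_def)
    hence "(\<Prod>l<d. phi j (Suc l) (gg i p 1 (Suc l))) = 0" using i by (intro prod_zero) auto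
    thus ?thesis using False by simp
  qed
  finally show ?thesis by (simp add: phi_def)
qed

lemma app_gg0: "app \<psi> (gg i p 0) = complex_of_real t * (\<Sum>j<d. coef \<psi> j * a j p)"
  unfolding app_eq by (simp add: V_gg0 sum_distrib_left mult_ac)

lemma app_gg1: "i < d \<Longrightarrow> app \<psi> (gg i p 1) = coef \<psi> i * a i p * complex_of_real s"
proof -
  assume i: "i < d"
  have "app \<psi> (gg i p 1) = (\<Sum>j<d. coef \<psi> j * (if j = i then a i p * complex_of_real s else 0))"
    unfolding app_eq by (intro sum.cong refl) (metis V_gg1 i lessThan_iff)
  also have "\<dots> = coef \<psi> i * (a i p * complex_of_real s)"
    by (subst sum_one_pt[of _ i]) (use i in auto)
  finally show ?thesis by (simp add: mult.assoc)
qed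

lemma prod_key:
  assumes S2: "2 \<le> card (supp \<psi>)"
    and pp: "producible_pure (Suc d) (sys_anc_dims d m) j v"
    and veq: "\<forall>f\<in>M. v f = app \<psi> f"
  shows "card (supp \<psi>) + 1 \<le> j"
proof -
  define S where "S = supp \<psi>"
  obtain P \<phi> where P: "partition_on {..<Suc d} P" "\<forall>B\<in>P. card B \<le> j"
      "\<forall>f\<in>M. v f = (\<Prod>B\<in>P. \<phi> B (restrict f B))"
    using pp unfolding producible_pure_def by blast
  have Psub: "\<And>B. B \<in> P \<Longrightarrow> B \<subseteq> {..<Suc d}" using P(1) unfolding partition_on_def by auto
  have disj: "\<And>B B'. B \<in> P \<Longrightarrow> B' \<in> P \<Longrightarrow> B \<noteq> B' \<Longrightarrow> B \<inter> B' = {}"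
    using P(1) unfolding partition_on_def disjoint_def by blast
  have finP: "finite P"
  proof -
    have "P \<subseteq> Pow {..<Suc d}" using Psub by auto
    thus ?thesis using finite_subset by blast
  qed
  obtain B0 where B0: "B0 \<in> P" "0 \<in> B0"
    using P(1) unfolding partition_on_def by (metis UnionE lessThan_iff zero_less_Suc)
  have claim: "Suc ` S \<subseteq> B0"
  proof (rule ccontr)
    assume "\<not> Suc ` S \<subseteq> B0"
    then obtain i where iS: "i \<in> S" and iB0: "Suc i \<notin> B0" by auto
    have i: "i < d" using iS supp_sub unfolding S_def by auto
    obtain B' where B': "B' \<in> P" "Suc i \<in> B'"
      using P(1) i unfolding partition_on_def by (metis UnionE lessThan_iff Suc_less_eq)
    have BB: "B0 \<noteq> B'" using iB0 B' by auto
    define A where "A p = \<phi> B0 (restrict (gg i p 0) B0)" for p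
    define Bf where "Bf y = \<phi> B' (restrict (gg i 0 y) B')" for y
    define C where "C = (\<Prod>B\<in>P - {B0} - {B'}. \<phi> B (restrict (gg i 0 0) B))"
    have fact: "\<And>p y. p < d \<Longrightarrow> y < m \<Longrightarrow> app \<psi> (gg i p y) = A p * Bf y * C"
    proof -
      fix p y assume p: "p < d" and y: "y < m"
      have r1: "\<And>B. B \<in> P \<Longrightarrow> B \<noteq> B' \<Longrightarrow> restrict (gg i p y) B = restrict (gg i p 0) B"
      proof -
        fix B assume "B \<in> P" "B \<noteq> B'"
        hence "Suc i \<notin> B" using disj[of B B'] B' by auto
        thus "restrict (gg i p y) B = restrict (gg i p 0) B" by (auto simp: restrict_def gg_def)
      qed
      have r2: "\<And>B q z. B \<in> P \<Longrightarrow> B \<noteq> B0 \<Longrightarrow> restrict (gg i q z) B = restrict (gg i 0 z) B"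
      proof -
        fix B q z assume "B \<in> P" "B \<noteq> B0"
        hence "0 \<notin> B" using disj[of B B0] B0 by auto
        thus "restrict (gg i q z) B = restrict (gg i 0 z) B" by (auto simp: restrict_def gg_def)
      qed
      have "app \<psi> (gg i p y) = (\<Prod>B\<in>P. \<phi> B (restrict (gg i p y) B))"
        using veq P(3) gg_M[OF i p y] by simp
      also have "\<dots> = \<phi> B0 (restrict (gg i p y) B0) * (\<Prod>B\<in>P - {B0}. \<phi> B (restrict (gg i p y) B))"
        by (rule prod.remove[OF finP B0(1)])
      also have "(\<Prod>B\<in>P - {B0}. \<phi> B (restrict (gg i p y) B)) =
          \<phi> B' (restrict (gg i p y) B') * (\<Prod>B\<in>P - {B0} - {B'}. \<phi> B (restrict (gg i p y) B))"
        by (rule prod.remove) (use finP B' BB in auto)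
      also have "(\<Prod>B\<in>P - {B0} - {B'}. \<phi> B (restrict (gg i p y) B)) = C"
      proof -
        have "\<And>B. B \<in> P - {B0} - {B'} \<Longrightarrow> restrict (gg i p y) B = restrict (gg i 0 0) B"
        proof -
          fix B assume B: "B \<in> P - {B0} - {B'}"
          have "restrict (gg i p y) B = restrict (gg i p 0) B" using r1[of B] B by blast
          also have "\<dots> = restrict (gg i 0 0) B" using r2[of B p 0] B by blast
          finally show "restrict (gg i p y) B = restrict (gg i 0 0) B" .
        qed
        thus ?thesis unfolding C_def by (intro prod.cong refl) simp
      qed
      also have "restrict (gg i p y) B0 = restrict (gg i p 0) B0" using r1 B0(1) BB by blast
      also have "restrict (gg i p y) B' = restrict (gg i 0 y) B'" using r2[of B' p y] B'(1) BB by blast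
      finally show "app \<psi> (gg i p y) = A p * Bf y * C" unfolding A_def Bf_def by (simp only: mult.assoc)
    qed
    define w where "w p = (\<Sum>j<d. coef \<psi> j * a j p)" for p
    have ci: "coef \<psi> i \<noteq> 0" using iS unfolding S_def supp_def by auto
    have m1: "0 < m" "1 < m" using m2 by auto
    have cross: "\<And>p p'. p < d \<Longrightarrow> p' < d \<Longrightarrow> w p * a i p' = a i p * w p'"
    proof -
      fix p p' assume p: "p < d" and p': "p' < d"
      have "app \<psi> (gg i p 0) * app \<psi> (gg i p' 1) = app \<psi> (gg i p 1) * app \<psi> (gg i p' 0)"
        using fact[OF p m1(1)] fact[OF p' m1(2)] fact[OF p m1(2)] fact[OF p' m1(1)] by (simp add: mult_ac)
      hence "(complex_of_real t * complex_of_real s * coef \<psi> i) * (w p * a i p') =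
             (complex_of_real t * complex_of_real s * coef \<psi> i) * (a i p * w p')"
        unfolding app_gg0 app_gg1[OF i] w_def by (simp add: mult_ac)
      moreover have "complex_of_real t * complex_of_real s * coef \<psi> i \<noteq> 0"
        using t_pos s_pos ci by simp
      ultimately show "w p * a i p' = a i p * w p'" by simp
    qed
    obtain p' where p': "p' < d" "a i p' \<noteq> 0" using a_nz[OF i] by blast
    define lam where "lam = w p' / a i p'"
    define c' where "c' j = coef \<psi> j - (if j = i then lam else 0)" for j
    have "\<forall>k<d. (\<Sum>j<d. c' j * a j k) = 0"
    proof (intro allI impI)
      fix k assume k: "k < d"
      have "(\<Sum>j<d. c' j * a j k) = w k - (\<Sum>j<d. (if j = i then lam else 0) * a j k)"
        unfolding c'_def w_def by (simp add: left_diff_distrib sum_subtractf)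
      also have "(\<Sum>j<d. (if j = i then lam else 0) * a j k) = lam * a i k"
        by (subst sum_one_pt[of _ i]) (use i in auto)
      also have "w k = lam * a i k"
        using cross[OF k p'(1)] p'(2) unfolding lam_def by (simp add: field_simps)
      finally show "(\<Sum>j<d. c' j * a j k) = 0" by simp
    qed
    hence c'0: "\<And>j. j < d \<Longrightarrow> c' j = 0" using a_indep by blast
    have "S \<noteq> {i}" using S2 unfolding S_def by auto
    then obtain j where jS: "j \<in> S" "j \<noteq> i" using iS by blast
    have "j < d" using jS supp_sub unfolding S_def by auto
    hence "coef \<psi> j = 0" using c'0[of j] jS(2) by (simp add: c'_def)
    thus False using jS(1) unfolding S_def supp_def by auto
  qed
  have fin0: "finite B0" using Psub[OF B0(1)] finite_subset by blast
  have "insert 0 (Suc ` S) \<subseteq> B0" using claim B0(2) by auto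
  hence "card (insert 0 (Suc ` S)) \<le> card B0" using fin0 by (rule card_mono[rotated])
  moreover have "card (insert 0 (Suc ` S)) = card S + 1"
  proof -
    have "finite S" unfolding S_def by (rule finite_supp)
    moreover have "0 \<notin> Suc ` S" by auto
    ultimately show ?thesis by (simp add: card_image)
  qed
  ultimately show ?thesis using P(2) B0(1) unfolding S_def by fastforce
qed

end

context thm1 begin

abbreviation "NN \<rho> \<equiv> nonclassical_number {..<d} {..<d} \<chi> \<rho>"

lemma decomp_exists:
  assumes dens: "density_op {..<d} \<rho>"
  shows "\<exists>I p \<psi>. pure_decomp {..<d} \<rho> I p \<psi>"
proof -
  have h1: "\<And>x y. x < d \<Longrightarrow> y < d \<Longrightarrow> \<rho> y x = cnj (\<rho> x y)"
    using dens unfolding density_op_def by (meson lessThan_iff)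
  have h2: "\<And>v. 0 \<le> Re (\<Sum>x<d. \<Sum>y<d. cnj (v x) * \<rho> x y * v y)"
    using dens unfolding density_op_def by blast
  have "psd d \<rho>" unfolding psd_def using h1 h2 by blast
  then obtain w where w: "\<forall>x<d. \<forall>y<d. \<rho> x y = (\<Sum>k<d. w k x * cnj (w k y))"
    using chol by blast
  define I where "I = {k. k < d \<and> norm2 (w k) \<noteq> 0}"
  define p where "p k = norm2 (w k)" for k
  define \<psi> where "\<psi> k x = w k x / complex_of_real (sqrt (p k))" for k x
  have z: "\<And>k x. k < d \<Longrightarrow> k \<notin> I \<Longrightarrow> x < d \<Longrightarrow> w k x = 0"
  proof -
    fix k x assume "k < d" "k \<notin> I" "x < d"
    hence "norm2 (w k) = 0" unfolding I_def by auto
    hence "\<forall>x\<in>{..<d}. (cmod (w k x))^2 = 0"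
      unfolding norm2_def by (subst sum_nonneg_eq_0_iff[symmetric]) auto
    thus "w k x = 0" using \<open>x < d\<close> by simp
  qed
  have ppos: "\<forall>k\<in>I. 0 < p k" unfolding I_def p_def using norm2_nonneg
    by (metis (mono_tags, lifting) mem_Collect_eq order_le_less)
  have sq: "\<And>k. k \<in> I \<Longrightarrow> complex_of_real (sqrt (p k)) * complex_of_real (sqrt (p k)) = complex_of_real (p k)"
  proof -
    fix k assume "k \<in> I"
    hence "0 \<le> p k" using ppos by force
    thus "complex_of_real (sqrt (p k)) * complex_of_real (sqrt (p k)) = complex_of_real (p k)"
      by (simp del: of_real_mult add: of_real_mult[symmetric])
  qed
  have sqnz: "\<And>k. k \<in> I \<Longrightarrow> complex_of_real (sqrt (p k)) \<noteq> 0" using ppos by force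
  have diag: "\<And>x. x < d \<Longrightarrow> \<rho> x x = complex_of_real (\<Sum>k<d. (cmod (w k x))^2)"
  proof -
    fix x assume x: "x < d"
    have "\<rho> x x = (\<Sum>k<d. w k x * cnj (w k x))" using w x by simp
    also have "\<dots> = complex_of_real (\<Sum>k<d. (cmod (w k x))^2)"
      unfolding of_real_sum by (rule sum.cong[OF refl]) (rule complex_norm_square[symmetric])
    finally show "\<rho> x x = complex_of_real (\<Sum>k<d. (cmod (w k x))^2)" .
  qed
  have "(\<Sum>k\<in>I. p k) = (\<Sum>k<d. p k)"
    by (rule sum.mono_neutral_left) (auto simp: I_def p_def)
  also have "\<dots> = (\<Sum>x<d. \<Sum>k<d. (cmod (w k x))^2)" unfolding p_def norm2_def by (rule sum.swap)
  finally have ps: "(\<Sum>k\<in>I. p k) = (\<Sum>x<d. \<Sum>k<d. (cmod (w k x))^2)" .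
  have "(\<Sum>x<d. \<rho> x x) = (\<Sum>x<d. complex_of_real (\<Sum>k<d. (cmod (w k x))^2))"
    by (rule sum.cong[OF refl]) (metis diag lessThan_iff)
  also have "\<dots> = complex_of_real (\<Sum>x<d. \<Sum>k<d. (cmod (w k x))^2)" by (rule of_real_sum[symmetric])
  finally have "complex_of_real (\<Sum>k\<in>I. p k) = (\<Sum>x<d. \<rho> x x)" using ps by simp
  also have "\<dots> = 1" using dens unfolding density_op_def by blast
  finally have sum1: "sum p I = 1" by (metis of_real_eq_1_iff)
  have unit: "\<forall>k\<in>I. unit_vec {..<d} (\<psi> k)"
  proof
    fix k assume k: "k \<in> I"
    have "inner_on {..<d} (\<psi> k) (\<psi> k) = (\<Sum>x<d. cnj (w k x) * w k x) / (complex_of_real (sqrt (p k)) * complex_of_real (sqrt (p k)))"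
      unfolding inner_on_def \<psi>_def by (simp add: sum_divide_distrib)
    also have "\<dots> = 1"
    proof -
      have "p k \<noteq> 0" using ppos k by force
      thus ?thesis using sq[OF k] by (simp add: norm2_eq p_def)
    qed
    finally show "unit_vec {..<d} (\<psi> k)" unfolding unit_vec_def .
  qed
  have form: "\<forall>x\<in>{..<d}. \<forall>y\<in>{..<d}. \<rho> x y = (\<Sum>k\<in>I. complex_of_real (p k) * \<psi> k x * cnj (\<psi> k y))"
  proof (intro ballI)
    fix x y assume "x \<in> {..<d}" "y \<in> {..<d}"
    hence x: "x < d" and y: "y < d" by auto
    have "\<rho> x y = (\<Sum>k<d. w k x * cnj (w k y))" using w x y by simp
    also have "\<dots> = (\<Sum>k\<in>I. w k x * cnj (w k y))"
      by (rule sum.mono_neutral_right) (use z x in \<open>auto simp: I_def\<close>)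
    also have "\<dots> = (\<Sum>k\<in>I. complex_of_real (p k) * \<psi> k x * cnj (\<psi> k y))"
    proof (intro sum.cong refl)
      fix k assume k: "k \<in> I"
      show "w k x * cnj (w k y) = complex_of_real (p k) * \<psi> k x * cnj (\<psi> k y)"
        unfolding \<psi>_def using sq[OF k] sqnz[OF k] by (simp add: field_simps)
    qed
    finally show "\<rho> x y = (\<Sum>k\<in>I. complex_of_real (p k) * \<psi> k x * cnj (\<psi> k y))" .
  qed
  have "pure_decomp {..<d} \<rho> I p \<psi>"
    unfolding pure_decomp_def using ppos sum1 unit form by (auto simp: I_def)
  thus ?thesis by blast
qed

lemma NR_le_d: "nonclassical_rank {..<d} {..<d} \<chi> \<psi> \<le> d"
  unfolding NR_eq using card_mono[OF _ supp_sub] by simp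

lemma NN_attained:
  assumes "density_op {..<d} \<rho>"
  shows "\<exists>I p \<psi>. pure_decomp {..<d} \<rho> I p \<psi> \<and> (\<forall>i\<in>I. nonclassical_rank {..<d} {..<d} \<chi> (\<psi> i) \<le> NN \<rho>)"
proof -
  obtain I p \<psi> where "pure_decomp {..<d} \<rho> I p \<psi>" using decomp_exists[OF assms] by blast
  hence ex: "\<exists>k I p \<psi>. pure_decomp {..<d} \<rho> I p \<psi> \<and> (\<forall>i\<in>I. nonclassical_rank {..<d} {..<d} \<chi> (\<psi> i) \<le> k)"
    using NR_le_d by blast
  show ?thesis unfolding nonclassical_number_def by (rule LeastI_ex[OF ex])
qed

lemma NN_le:
  "pure_decomp {..<d} \<rho> I p \<psi> \<Longrightarrow> \<forall>i\<in>I. nonclassical_rank {..<d} {..<d} \<chi> (\<psi> i) \<le> k \<Longrightarrow> NN \<rho> \<le> k"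
  unfolding nonclassical_number_def by (rule Least_le) blast

lemma decomp_nonempty: "pure_decomp X \<rho> I p \<psi> \<Longrightarrow> I \<noteq> {}"
  unfolding pure_decomp_def by auto

lemma NN_ge1:
  assumes "density_op {..<d} \<rho>" shows "1 \<le> NN \<rho>"
proof -
  obtain I p \<psi> where D: "pure_decomp {..<d} \<rho> I p \<psi>"
    "\<forall>i\<in>I. nonclassical_rank {..<d} {..<d} \<chi> (\<psi> i) \<le> NN \<rho>"
    using NN_attained[OF assms] by blast
  obtain i where i: "i \<in> I" using decomp_nonempty[OF D(1)] by blast
  have "unit_vec {..<d} (\<psi> i)" using D(1) i unfolding pure_decomp_def by blast
  hence "supp (\<psi> i) \<noteq> {}" by (rule supp_nonempty)
  hence "1 \<le> card (supp (\<psi> i))" using finite_supp by (simp add: Suc_le_eq card_gt_0_iff)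
  thus ?thesis using D(2) i NR_eq by fastforce
qed

lemma push:
  assumes D: "pure_decomp {..<d} \<rho> I p \<psi>"
  shows "pure_decomp M (conj_op {..<d} Lam \<rho>) I p (\<lambda>k. app (\<psi> k))"
proof -
  have unit: "\<forall>k\<in>I. unit_vec M (app (\<psi> k))"
    using D unfolding pure_decomp_def unit_vec_def inner_on_def by (simp add: inner_pres)
  have form: "\<forall>f\<in>M. \<forall>g\<in>M. conj_op {..<d} Lam \<rho> f g =
      (\<Sum>k\<in>I. complex_of_real (p k) * app (\<psi> k) f * cnj (app (\<psi> k) g))"
  proof (intro ballI)
    fix f g
    have "conj_op {..<d} Lam \<rho> f g =
        (\<Sum>a<d. \<Sum>b<d. Lam f a * (\<Sum>k\<in>I. (complex_of_real (p k) * \<psi> k a) * cnj (\<psi> k b)) * cnj (Lam g b))"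
      unfolding conj_op_def using D unfolding pure_decomp_def by (intro sum.cong refl) auto
    also have "\<dots> = (\<Sum>k\<in>I. (\<Sum>a<d. Lam f a * (complex_of_real (p k) * \<psi> k a)) * (\<Sum>b<d. cnj (\<psi> k b) * cnj (Lam g b)))"
      by (rule sum_sandwich)
    also have "\<dots> = (\<Sum>k\<in>I. complex_of_real (p k) * app (\<psi> k) f * cnj (app (\<psi> k) g))"
      unfolding app_def by (intro sum.cong refl) (simp add: sum_distrib_left mult_ac)
    finally show "conj_op {..<d} Lam \<rho> f g = (\<Sum>k\<in>I. complex_of_real (p k) * app (\<psi> k) f * cnj (app (\<psi> k) g))" .
  qed
  show ?thesis using D unit form unfolding pure_decomp_def by blast
qed

end

context thm1 begin
definition adj :: "((nat \<Rightarrow> nat) \<Rightarrow> complex) \<Rightarrow> nat \<Rightarrow> complex" where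
  "adj u x = (\<Sum>f\<in>M. cnj (Lam f x) * u f)"

lemma adj_app: "x < d \<Longrightarrow> adj (app \<psi>) x = \<psi> x"
proof -
  assume x: "x < d"
  have "adj (app \<psi>) x = (\<Sum>f\<in>M. cnj (app (\<lambda>y. if y = x then 1 else 0) f) * app \<psi> f)"
    unfolding adj_def by (simp only: Lam_app[OF x])
  also have "\<dots> = (\<Sum>y<d. cnj (if y = x then 1 else 0) * \<psi> y)" by (rule inner_pres)
  also have "\<dots> = \<psi> x" by (subst sum_one_pt[of _ x]) (use x in auto)
  finally show ?thesis .
qed

lemma adjoint: "(\<Sum>f\<in>M. cnj (u f) * app \<psi> f) = (\<Sum>x<d. cnj (adj u x) * \<psi> x)"
proof -
  have "(\<Sum>f\<in>M. cnj (u f) * app \<psi> f) = (\<Sum>f\<in>M. \<Sum>x<d. cnj (u f) * Lam f x * \<psi> x)"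
    unfolding app_def by (simp add: sum_distrib_left mult_ac)
  also have "\<dots> = (\<Sum>x<d. \<Sum>f\<in>M. cnj (u f) * Lam f x * \<psi> x)" by (rule sum.swap)
  also have "\<dots> = (\<Sum>x<d. cnj (adj u x) * \<psi> x)"
    unfolding adj_def by (simp add: sum_distrib_right sum_distrib_left mult_ac)
  finally show ?thesis .
qed

lemma adj_diff: "adj (\<lambda>f. u f - v f) x = adj u x - adj v x"
  unfolding adj_def by (simp add: right_diff_distrib sum_subtractf)

lemma pull:
  assumes D: "pure_decomp M (conj_op {..<d} Lam \<rho>) I q \<phi>"
  shows "pure_decomp {..<d} \<rho> I q (\<lambda>k. adj (\<phi> k)) \<and> (\<forall>k\<in>I. \<forall>f\<in>M. \<phi> k f = app (adj (\<phi> k)) f)"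
proof -
  have finI: "finite I" and qpos: "\<forall>k\<in>I. 0 < q k" and q1: "sum q I = 1"
    and unitM: "\<forall>k\<in>I. unit_vec M (\<phi> k)"
    and form: "\<forall>f\<in>M. \<forall>g\<in>M. conj_op {..<d} Lam \<rho> f g = (\<Sum>k\<in>I. complex_of_real (q k) * \<phi> k f * cnj (\<phi> k g))"
    using D unfolding pure_decomp_def by auto
  have Q1: "(\<Sum>f\<in>M. \<Sum>g\<in>M. cnj (u f) * conj_op {..<d} Lam \<rho> f g * u g) =
      (\<Sum>a<d. \<Sum>b<d. cnj (adj u a) * \<rho> a b * adj u b)" for u
  proof -
    have "(\<Sum>f\<in>M. \<Sum>g\<in>M. cnj (u f) * conj_op {..<d} Lam \<rho> f g * u g) =
      (\<Sum>a<d. \<Sum>b<d. (\<Sum>f\<in>M. cnj (u f) * Lam f a) * \<rho> a b * (\<Sum>g\<in>M. cnj (Lam g b) * u g))"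
      unfolding conj_op_def by (rule sum_sandwich2)
    also have "\<dots> = (\<Sum>a<d. \<Sum>b<d. cnj (adj u a) * \<rho> a b * adj u b)"
      unfolding adj_def by (simp add: mult.commute)
    finally show ?thesis .
  qed
  have Q2: "(\<Sum>f\<in>M. \<Sum>g\<in>M. cnj (u f) * conj_op {..<d} Lam \<rho> f g * u g) =
      (\<Sum>k\<in>I. complex_of_real (q k) * complex_of_real ((cmod (\<Sum>f\<in>M. cnj (u f) * \<phi> k f))^2))" for u
  proof -
    have "(\<Sum>f\<in>M. \<Sum>g\<in>M. cnj (u f) * conj_op {..<d} Lam \<rho> f g * u g) =
      (\<Sum>f\<in>M. \<Sum>g\<in>M. cnj (u f) * (\<Sum>k\<in>I. (complex_of_real (q k) * \<phi> k f) * cnj (\<phi> k g)) * u g)"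
      using form by (intro sum.cong refl) auto
    also have "\<dots> = (\<Sum>k\<in>I. (\<Sum>f\<in>M. cnj (u f) * (complex_of_real (q k) * \<phi> k f)) * (\<Sum>g\<in>M. cnj (\<phi> k g) * u g))"
      by (rule sum_sandwich)
    also have "\<dots> = (\<Sum>k\<in>I. complex_of_real (q k) * ((\<Sum>f\<in>M. cnj (u f) * \<phi> k f) * cnj (\<Sum>f\<in>M. cnj (u f) * \<phi> k f)))"
      by (intro sum.cong refl) (simp add: sum_distrib_left mult_ac)
    also have "\<dots> = (\<Sum>k\<in>I. complex_of_real (q k) * complex_of_real ((cmod (\<Sum>f\<in>M. cnj (u f) * \<phi> k f))^2))"
      by (simp only: complex_norm_square)
    finally show ?thesis .
  qed
  have zero: "\<And>u k. (\<forall>x<d. adj u x = 0) \<Longrightarrow> k \<in> I \<Longrightarrow> (\<Sum>f\<in>M. cnj (u f) * \<phi> k f) = 0"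
  proof -
    fix u k assume a0: "\<forall>x<d. adj u x = 0" and k: "k \<in> I"
    have "(\<Sum>k\<in>I. complex_of_real (q k * (cmod (\<Sum>f\<in>M. cnj (u f) * \<phi> k f))^2)) = 0"
      using Q1[of u] Q2[of u] a0 by simp
    hence "(\<Sum>k\<in>I. q k * (cmod (\<Sum>f\<in>M. cnj (u f) * \<phi> k f))^2) = 0"
      unfolding of_real_sum[symmetric] by (metis of_real_eq_0_iff)
    hence "q k * (cmod (\<Sum>f\<in>M. cnj (u f) * \<phi> k f))^2 = 0"
      using finI k qpos by (subst (asm) sum_nonneg_eq_0_iff) (auto intro: mult_nonneg_nonneg less_imp_le)
    moreover have "q k \<noteq> 0" using qpos k by force
    ultimately show "(\<Sum>f\<in>M. cnj (u f) * \<phi> k f) = 0" by simp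
  qed
  have range: "\<forall>k\<in>I. \<forall>f\<in>M. \<phi> k f = app (adj (\<phi> k)) f"
  proof (intro ballI)
    fix k f assume k: "k \<in> I" and f: "f \<in> M"
    define r where "r g = \<phi> k g - app (adj (\<phi> k)) g" for g
    have ar: "\<forall>x<d. adj r x = 0"
      unfolding r_def using adj_diff[of "\<phi> k" "app (adj (\<phi> k))"] adj_app by simp
    have "(\<Sum>g\<in>M. cnj (r g) * \<phi> k g) = 0" using zero[OF ar k] .
    moreover have "(\<Sum>g\<in>M. cnj (r g) * app (adj (\<phi> k)) g) = 0"
      unfolding adjoint using ar by simp
    ultimately have "(\<Sum>g\<in>M. cnj (r g) * r g) = 0"
      unfolding r_def[of g for g] by (simp add: right_diff_distrib sum_subtractf)
    hence "r f = 0" by (rule sum_sq_zero[OF finite_M _ f])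
    thus "\<phi> k f = app (adj (\<phi> k)) f" unfolding r_def by simp
  qed
  have unitX: "\<forall>k\<in>I. unit_vec {..<d} (adj (\<phi> k))"
  proof
    fix k assume k: "k \<in> I"
    have "inner_on {..<d} (adj (\<phi> k)) (adj (\<phi> k)) = (\<Sum>f\<in>M. cnj (app (adj (\<phi> k)) f) * app (adj (\<phi> k)) f)"
      unfolding inner_on_def by (rule inner_pres[symmetric])
    also have "\<dots> = (\<Sum>f\<in>M. cnj (\<phi> k f) * \<phi> k f)" using range k by simp
    also have "\<dots> = 1" using unitM k unfolding unit_vec_def inner_on_def by simp
    finally show "unit_vec {..<d} (adj (\<phi> k))" unfolding unit_vec_def .
  qed
  have formX: "\<forall>a\<in>{..<d}. \<forall>b\<in>{..<d}. \<rho> a b = (\<Sum>k\<in>I. complex_of_real (q k) * adj (\<phi> k) a * cnj (adj (\<phi> k) b))"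
  proof (intro ballI)
    fix a b assume "a \<in> {..<d}" "b \<in> {..<d}"
    hence a: "a < d" and b: "b < d" by auto
    have iso: "\<And>x y. x < d \<Longrightarrow> y < d \<Longrightarrow> (\<Sum>f\<in>M. cnj (Lam f x) * Lam f y) = (if x = y then 1 else 0)"
      using isometry unfolding isometry_on_def by auto
    have "(\<Sum>f\<in>M. \<Sum>g\<in>M. cnj (Lam f a) * conj_op {..<d} Lam \<rho> f g * Lam g b) =
      (\<Sum>a'<d. \<Sum>b'<d. (\<Sum>f\<in>M. cnj (Lam f a) * Lam f a') * \<rho> a' b' * (\<Sum>g\<in>M. cnj (Lam g b') * Lam g b))"
      unfolding conj_op_def by (rule sum_sandwich2)
    also have "\<dots> = (\<Sum>a'<d. \<Sum>b'<d. (if a = a' then 1 else 0) * \<rho> a' b' * (if b' = b then 1 else 0))"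
      by (intro sum.cong refl) (simp add: iso a b)
    also have "\<dots> = \<rho> a b"
      by (subst sum_one_pt[of _ a], simp, use a in simp, simp, subst sum_one_pt[of _ b]) (use b in auto)
    finally have e1: "(\<Sum>f\<in>M. \<Sum>g\<in>M. cnj (Lam f a) * conj_op {..<d} Lam \<rho> f g * Lam g b) = \<rho> a b" .
    have "(\<Sum>f\<in>M. \<Sum>g\<in>M. cnj (Lam f a) * conj_op {..<d} Lam \<rho> f g * Lam g b) =
      (\<Sum>f\<in>M. \<Sum>g\<in>M. cnj (Lam f a) * (\<Sum>k\<in>I. (complex_of_real (q k) * \<phi> k f) * cnj (\<phi> k g)) * Lam g b)"
      using form by (intro sum.cong refl) auto
    also have "\<dots> = (\<Sum>k\<in>I. (\<Sum>f\<in>M. cnj (Lam f a) * (complex_of_real (q k) * \<phi> k f)) * (\<Sum>g\<in>M. cnj (\<phi> k g) * Lam g b))"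
      by (rule sum_sandwich)
    also have "\<dots> = (\<Sum>k\<in>I. complex_of_real (q k) * adj (\<phi> k) a * cnj (adj (\<phi> k) b))"
      unfolding adj_def by (intro sum.cong refl) (simp add: sum_distrib_left mult_ac)
    finally show "\<rho> a b = (\<Sum>k\<in>I. complex_of_real (q k) * adj (\<phi> k) a * cnj (adj (\<phi> k) b))"
      using e1 by simp
  qed
  have "pure_decomp {..<d} \<rho> I q (\<lambda>k. adj (\<phi> k))"
    unfolding pure_decomp_def using finI qpos q1 unitX formX by blast
  thus ?thesis using range by blast
qed

end

context thm1 begin

abbreviation "dims \<equiv> sys_anc_dims d m"

lemma NN_bound:
  assumes pr: "producible (Suc d) dims j (conj_op {..<d} Lam \<rho>)"
  shows "NN \<rho> \<le> max 1 (j - 1)"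
proof -
  obtain I q \<phi> where D: "pure_decomp M (conj_op {..<d} Lam \<rho>) I q \<phi>"
      and pp: "\<forall>k\<in>I. producible_pure (Suc d) dims j (\<phi> k)"
    using pr unfolding producible_def by blast
  have P: "pure_decomp {..<d} \<rho> I q (\<lambda>k. adj (\<phi> k))" and R: "\<forall>k\<in>I. \<forall>f\<in>M. \<phi> k f = app (adj (\<phi> k)) f"
    using pull[OF D] by auto
  have "\<forall>k\<in>I. nonclassical_rank {..<d} {..<d} \<chi> (adj (\<phi> k)) \<le> max 1 (j - 1)"
  proof
    fix k assume k: "k \<in> I"
    show "nonclassical_rank {..<d} {..<d} \<chi> (adj (\<phi> k)) \<le> max 1 (j - 1)"
    proof (cases "2 \<le> card (supp (adj (\<phi> k)))")
      case True
      have "card (supp (adj (\<phi> k))) + 1 \<le> j"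
        by (rule prod_key[OF True]) (use pp R k in auto)
      thus ?thesis unfolding NR_eq by simp
    next
      case False thus ?thesis unfolding NR_eq by simp
    qed
  qed
  thus ?thesis by (rule NN_le[OF P])
qed

lemma producible_up:
  assumes dens: "density_op {..<d} \<rho>"
  shows "producible (Suc d) dims (if NN \<rho> = 1 then 1 else NN \<rho> + 1) (conj_op {..<d} Lam \<rho>)"
proof -
  obtain I p \<psi> where D: "pure_decomp {..<d} \<rho> I p \<psi>"
    and le: "\<forall>i\<in>I. nonclassical_rank {..<d} {..<d} \<chi> (\<psi> i) \<le> NN \<rho>"
    using NN_attained[OF dens] by blast
  have "\<forall>i\<in>I. producible_pure (Suc d) dims (if NN \<rho> = 1 then 1 else NN \<rho> + 1) (app (\<psi> i))"
  proof
    fix i assume i: "i \<in> I"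
    have "unit_vec {..<d} (\<psi> i)" using D i unfolding pure_decomp_def by blast
    hence ne: "supp (\<psi> i) \<noteq> {}" by (rule supp_nonempty)
    have r: "card (supp (\<psi> i)) \<le> NN \<rho>" using le i NR_eq by metis
    show "producible_pure (Suc d) dims (if NN \<rho> = 1 then 1 else NN \<rho> + 1) (app (\<psi> i))"
    proof (cases "card (supp (\<psi> i)) = 1")
      case True
      then obtain j where "supp (\<psi> i) = {j}" by (rule card_1_singletonE)
      hence "producible_pure (Suc d) dims 1 (app (\<psi> i))" by (rule prod_one)
      thus ?thesis by (rule producible_pure_mono) simp
    next
      case False
      have "card (supp (\<psi> i)) \<noteq> 0" using ne finite_supp by simp
      hence "2 \<le> card (supp (\<psi> i))" using False by simp
      hence "NN \<rho> \<noteq> 1" using r by simp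
      have "producible_pure (Suc d) dims (card (supp (\<psi> i)) + 1) (app (\<psi> i))" by (rule prod_gen[OF ne])
      thus ?thesis by (rule producible_pure_mono) (use r \<open>NN \<rho> \<noteq> 1\<close> in simp)
    qed
  qed
  thus ?thesis using push[OF D] unfolding producible_def by blast
qed

lemma producible_not_zero: "\<not> producible (Suc d) dims 0 \<rho>'"
proof
  assume "producible (Suc d) dims 0 \<rho>'"
  then obtain I p \<phi> where D: "pure_decomp M \<rho>' I p \<phi>" and pp: "\<forall>i\<in>I. producible_pure (Suc d) dims 0 (\<phi> i)"
    unfolding producible_def by blast
  obtain i where "i \<in> I" using decomp_nonempty[OF D] by blast
  thus False using pp producible_pure_zero[of "Suc d" dims "\<phi> i"] by simp
qed

lemma main_a:
  assumes dens: "density_op {..<d} \<rho>" and k2: "2 \<le> NN \<rho>"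
  shows "ent_depth (Suc d) dims (conj_op {..<d} Lam \<rho>) = NN \<rho> + 1"
  unfolding ent_depth_def
proof (rule Least_equality)
  show "producible (Suc d) dims (NN \<rho> + 1) (conj_op {..<d} Lam \<rho>)"
    using producible_up[OF dens] k2 by simp
next
  fix y assume "producible (Suc d) dims y (conj_op {..<d} Lam \<rho>)"
  hence "NN \<rho> \<le> max 1 (y - 1)" by (rule NN_bound)
  thus "NN \<rho> + 1 \<le> y" using k2 by linarith
qed

lemma main_b:
  assumes dens: "density_op {..<d} \<rho>" and k1: "NN \<rho> = 1"
  shows "ent_depth (Suc d) dims (conj_op {..<d} Lam \<rho>) = 1"
  unfolding ent_depth_def
proof (rule Least_equality)
  show "producible (Suc d) dims 1 (conj_op {..<d} Lam \<rho>)"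
    using producible_up[OF dens] k1 by simp
next
  fix y assume "producible (Suc d) dims y (conj_op {..<d} Lam \<rho>)"
  thus "1 \<le> y" using producible_not_zero by (cases y) auto
qed

end

theorem theorem1:
  fixes d m :: nat and \<chi> :: "nat \<Rightarrow> nat \<Rightarrow> complex"
  assumes "2 \<le> m"
    and "\<forall>i<d. unit_vec {..<d} (\<chi> i)"
    and "lin_indep_on {..<d} {..<d} \<chi>"
    and "spans_on {..<d} {..<d} \<chi>"
  shows "\<exists>\<Lambda>. isometry_on {..<d} (mp_idx (d + 1) (sys_anc_dims d m)) \<Lambda> \<and>
     (\<forall>\<rho> k. density_op {..<d} \<rho> \<and> nonclassical_number {..<d} {..<d} \<chi> \<rho> = k \<longrightarrow>
        ((2 \<le> k \<and> k \<le> d \<longrightarrow>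
            ent_depth (d + 1) (sys_anc_dims d m) (conj_op {..<d} \<Lambda> \<rho>) = k + 1) \<and>
         (ent_depth (d + 1) (sys_anc_dims d m) (conj_op {..<d} \<Lambda> \<rho>) = 1 \<longleftrightarrow> k = 1)))"
proof -
  interpret T: thm1 d m \<chi> by (rule thm1.intro) (use assms in auto)
  have dd: "d + 1 = Suc d" by simp
  show ?thesis
  proof (intro exI[of _ T.Lam] conjI)
    show "isometry_on {..<d} (mp_idx (d + 1) (sys_anc_dims d m)) T.Lam" unfolding dd by (rule T.isometry)
  next
    show "\<forall>\<rho> k. density_op {..<d} \<rho> \<and> nonclassical_number {..<d} {..<d} \<chi> \<rho> = k \<longrightarrow>
        ((2 \<le> k \<and> k \<le> d \<longrightarrow>
            ent_depth (d + 1) (sys_anc_dims d m) (conj_op {..<d} T.Lam \<rho>) = k + 1) \<and>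
         (ent_depth (d + 1) (sys_anc_dims d m) (conj_op {..<d} T.Lam \<rho>) = 1 \<longleftrightarrow> k = 1))"
    proof (intro allI impI)
      fix \<rho> k
      assume H: "density_op {..<d} \<rho> \<and> nonclassical_number {..<d} {..<d} \<chi> \<rho> = k"
      hence dens: "density_op {..<d} \<rho>" and kk: "nonclassical_number {..<d} {..<d} \<chi> \<rho> = k" by auto
      have k1: "1 \<le> k" using T.NN_ge1[OF dens] kk by simp
      have A: "2 \<le> k \<Longrightarrow> ent_depth (Suc d) (sys_anc_dims d m) (conj_op {..<d} T.Lam \<rho>) = k + 1"
        using T.main_a[OF dens] kk by auto
      have B: "k = 1 \<Longrightarrow> ent_depth (Suc d) (sys_anc_dims d m) (conj_op {..<d} T.Lam \<rho>) = 1"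
        using T.main_b[OF dens] kk by auto
      have C: "ent_depth (Suc d) (sys_anc_dims d m) (conj_op {..<d} T.Lam \<rho>) = 1 \<longleftrightarrow> k = 1"
      proof
        assume e: "ent_depth (Suc d) (sys_anc_dims d m) (conj_op {..<d} T.Lam \<rho>) = 1"
        show "k = 1"
        proof (rule ccontr)
          assume "k \<noteq> 1"
          hence "2 \<le> k" using k1 by simp
          thus False using A e by simp
        qed
      qed (rule B)
      show "(2 \<le> k \<and> k \<le> d \<longrightarrow>
            ent_depth (d + 1) (sys_anc_dims d m) (conj_op {..<d} T.Lam \<rho>) = k + 1) \<and>
         (ent_depth (d + 1) (sys_anc_dims d m) (conj_op {..<d} T.Lam \<rho>) = 1 \<longleftrightarrow> k = 1)"
        unfolding dd using A C by blast
    qed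
  qed
qed

end
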